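(* Consider the natural covering maps $X_{ns}^{+}(9)\xrightarrow{\pi_1}X_B\xrightarrow{\pi_2}X_{ns}^{+}(3)\xrightarrow{\pi_3}X(1)$, each of degree $3$, and the points $\infty,\rho,i\in X(1)$ (images of $\infty,\ e^{2\pi i/3},\ i\in\mathcal{H}^{*}$). Their branching above these points is as follows. (1) Above $\infty$: $X_{ns}^{+}(3)$ has one cusp, with ramification index $3$ over $X(1)$; $X_B$ has one cusp, with ramification index $9$ over $X(1)$; $X_{ns}^{+}(9)$ has three cusps, each with ramification index $9$ over $X(1)$ (so $\pi_1$ is unramified at them). (2) Above $\rho$: $X_{ns}^{+}(3)$ has one point, with ramification index $3$ over $X(1)$; $X_B$ has three points and $X_{ns}^{+}(9)$ has nine points, each with ramification index $3$ over $X(1)$ (so $\pi_1,\pi_2$ are unramified there). (3) Above $i$: $X_{ns}^{+}(3)$ has three points (the images of $i$, $i+1$, $i-1$), all unramified over $X(1)$. Above the image of $i$, $\pi_2$ has two points (images of $i$ and $i+3$) with ramification indices $1$ and $2$; above the image of $i-1$, $\pi_2$ has two points (images of $i-1$ and $i-4$) with ramification indices $2$ and $1$; above the image of $i+1$, $\pi_2$ has three unramified points (images of $i+1,i+4,i-2$). Above each of the two points of $X_B$ that are ramified over $X(1)$ (images of $i+3$ and $i-1$), $\pi_1$ has three unramified points; above each of the images of $i,i+1,i+4,i-2$ in $X_B$, $\pi_1$ has two points with ramification indices $1$ and $2$; above the image of $i-4$ in $X_B$, $\pi_1$ has three unramified points.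
   Context: Let $\mathcal{H}$ be the complex upper half plane and $\mathcal{H}^{*}=\mathcal{H}\cup\mathbf{P}^{1}(\mathbf{Q})$. Let $C(9)\subset \mathrm{SL}_2(\mathbf{Z}/9\mathbf{Z})$ be the subgroup generated by $\begin{pmatrix}0&-1\\1&0\end{pmatrix}$, $\begin{pmatrix}-1&-4\\-4&1\end{pmatrix}$ and $\begin{pmatrix}1&-3\\3&1\end{pmatrix}$ (the intersection with $\mathrm{SL}_2$ of the normalizer of a non-split Cartan subgroup of $\mathrm{GL}_2(\mathbf{Z}/9\mathbf{Z})$), let $C(3)\subset\mathrm{SL}_2(\mathbf{Z}/3\mathbf{Z})$ be its reduction mod $3$, and let $B\subset\mathrm{SL}_2(\mathbf{Z}/9\mathbf{Z})$ be the subgroup generated by $C(9)$ and $\begin{pmatrix}-2&3\\3&4\end{pmatrix}$ (so $C(9)\subset B\subset r^{-1}(C(3))$, each of index $3$, where $r$ is reduction mod $3$). Let $\Gamma_{C(9)},\Gamma_B$ be the groups of $\gamma\in\mathrm{SL}_2(\mathbf{Z})$ whose reduction mod $9$ lies in $C(9)$, resp. $B$, and $\Gamma_{C(3)}$ the group of $\gamma\in\mathrm{SL}_2(\mathbf{Z})$ whose reduction mod $3$ lies in $C(3)$. Define $X(1)=\mathcal{H}^{*}/\mathrm{SL}_2(\mathbf{Z})$, $X_{ns}^{+}(3)=\mathcal{H}^{*}/\Gamma_{C(3)}$, $X_B=\mathcal{H}^{*}/\Gamma_B$, $X_{ns}^{+}(9)=\mathcal{H}^{*}/\Gamma_{C(9)}$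 as compact Riemann surfaces, with the natural projection maps between them. *)

theory Defs
  imports Complex_Main
begin

text \<open>2x2 integer matrices (a,b,c,d) = [[a,b],[c,d]].\<close>
type_synonym mat2 = "int \<times> int \<times> int \<times> int"

fun mmul :: "mat2 \<Rightarrow> mat2 \<Rightarrow> mat2" where
  "mmul (a,b,c,d) (e,f,g,h) = (a*e+b*g, a*f+b*h, c*e+d*g, c*f+d*h)"

fun mneg :: "mat2 \<Rightarrow> mat2" where
  "mneg (a,b,c,d) = (-a,-b,-c,-d)"

definition mone :: mat2 where "mone = (1,0,0,1)"

definition SL2Z :: "mat2 set" where
  "SL2Z = {(a,b,c,d). a*d - b*c = 1}"

fun red :: "int \<Rightarrow> mat2 \<Rightarrow> mat2" where
  "red n (a,b,c,d) = (a mod n, b mod n, c mod n, d mod n)"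

text \<open>Subgroup of SL_2(Z/nZ) generated by S (a finite group, so the generated
  submonoid is the generated subgroup).\<close>
inductive_set gen :: "int \<Rightarrow> mat2 set \<Rightarrow> mat2 set" for n S where
  gen_one: "red n mone \<in> gen n S"
| gen_mul: "s \<in> S \<Longrightarrow> g \<in> gen n S \<Longrightarrow> red n (mmul s g) \<in> gen n S"

definition C9 :: "mat2 set" where
  "C9 = gen 9 {(0,-1,1,0), (-1,-4,-4,1), (1,-3,3,1)}"

definition C3 :: "mat2 set" where
  "C3 = red 3 ` C9"

definition Bgrp :: "mat2 set" where
  "Bgrp = gen 9 {(0,-1,1,0), (-1,-4,-4,1), (1,-3,3,1), (-2,3,3,4)}"

definition Gamma_C9 :: "mat2 set" where "Gamma_C9 = {g \<in> SL2Z. red 9 g \<in> C9}"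
definition Gamma_B  :: "mat2 set" where "Gamma_B  = {g \<in> SL2Z. red 9 g \<in> Bgrp}"
definition Gamma_C3 :: "mat2 set" where "Gamma_C3 = {g \<in> SL2Z. red 3 g \<in> C3}"

text \<open>Points of H* = H \<union> P^1(Q): an upper-half-plane point, or a cusp
  (None = \<infinity>, Some x = x \<in> Q).\<close>
datatype hpt = Inner complex | Cusp "rat option"

definition Hstar :: "hpt set" where
  "Hstar = {Inner z | z. Im z > 0} \<union> range Cusp"

fun act :: "mat2 \<Rightarrow> hpt \<Rightarrow> hpt" where
  "act (a,b,c,d) (Inner z) =
     Inner ((of_int a * z + of_int b) / (of_int c * z + of_int d))"
| "act (a,b,c,d) (Cusp None) =
     (if c = 0 then Cusp None else Cusp (Some (of_int a / of_int c)))"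
| "act (a,b,c,d) (Cusp (Some x)) =
     (if of_int c * x + of_int d = 0 then Cusp None
      else Cusp (Some ((of_int a * x + of_int b) / (of_int c * x + of_int d))))"

text \<open>The point G\<tau> of X_G = H*/G.\<close>
definition orb :: "mat2 set \<Rightarrow> hpt \<Rightarrow> hpt set" where
  "orb G \<tau> = {act g \<tau> | g. g \<in> G}"

text \<open>Points of X_{G'} lying above the point G\<tau> of X_G (for G' \<subseteq> G).\<close>
definition fiber :: "mat2 set \<Rightarrow> mat2 set \<Rightarrow> hpt \<Rightarrow> hpt set set" where
  "fiber G' G \<tau> = {orb G' x | x. x \<in> orb G \<tau>}"

definition stab :: "mat2 set \<Rightarrow> hpt \<Rightarrow> mat2 set" where
  "stab G \<tau> = {g \<in> G. act g \<tau> = \<tau>}"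

definition pm :: "mat2 set \<Rightarrow> mat2 set" where
  "pm S = S \<union> mneg ` S"

text \<open>Ramification index of X_{G'} \<rightarrow> X_G at the point G'\<tau>:
  the index [\<plusminus>G_\<tau> : \<plusminus>G'_\<tau>] of stabilizers (equivalently of their images in PSL_2),
  the standard formula (Diamond--Shurman, Sect. 2.3) for the ramification of the
  natural projection of compact modular curves.\<close>
definition ram :: "mat2 set \<Rightarrow> mat2 set \<Rightarrow> hpt \<Rightarrow> nat" where
  "ram G' G \<tau> = card ((\<lambda>g. mmul g ` pm (stab G' \<tau>)) ` pm (stab G \<tau>))"

definition cinf :: hpt where "cinf = Cusp None"
definition rho :: hpt where "rho = Inner (Complex (-1/2) (sqrt 3 / 2))"
definition pti :: "int \<Rightarrow> hpt" where "pti k = Inner (Complex (of_int k) 1)"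

end

theory Submission
  imports Defs
begin


fun minv :: "mat2 \<Rightarrow> mat2" where "minv (a,b,c,d) = (d,-b,-c,a)"
fun mdet :: "mat2 \<Rightarrow> int" where "mdet (a,b,c,d) = a*d - b*c"

lemma SL2Z_iff: "g \<in> SL2Z \<longleftrightarrow> mdet g = 1"
  by (cases g) (auto simp: SL2Z_def)

lemma mmul_assoc: "mmul (mmul x y) z = mmul x (mmul y z)"
  by (cases x; cases y; cases z) (simp add: algebra_simps)

lemma mmul_one[simp]: "mmul mone g = g" "mmul g mone = g"
  by (cases g, simp add: mone_def)+

lemma mdet_mmul: "mdet (mmul g h) = mdet g * mdet h"
  by (cases g; cases h) (simp add: algebra_simps)

lemma SL2Z_mmul: "g \<in> SL2Z \<Longrightarrow> h \<in> SL2Z \<Longrightarrow> mmul g h \<in> SL2Z"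
  by (simp add: SL2Z_iff mdet_mmul)

lemma SL2Z_minv: "g \<in> SL2Z \<Longrightarrow> minv g \<in> SL2Z"
  by (cases g) (simp add: SL2Z_iff algebra_simps)

lemma minv_mmul_cancel: "g \<in> SL2Z \<Longrightarrow> mmul (minv g) g = mone"
  "g \<in> SL2Z \<Longrightarrow> mmul g (minv g) = mone"
  by (cases g, auto simp: SL2Z_iff mone_def algebra_simps)+

lemma minv_mmul: "minv (mmul g h) = mmul (minv h) (minv g)"
  by (cases g; cases h) (simp add: algebra_simps)

lemma minv_minv[simp]: "minv (minv g) = g"
  by (cases g) simp

lemma SL2Z_mone: "mone \<in> SL2Z" by (simp add: SL2Z_def mone_def)

lemma red_red[simp]: "red n (red n g) = red n g"
  by (cases g) simp

lemma modaux1: "((x::int) mod n * y + z mod n * w) mod n = (x*y+z*w) mod n"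
  by (metis mod_add_eq mod_mult_left_eq)
lemma modaux2: "(y * ((x::int) mod n) + w * (z mod n)) mod n = (y*x+w*z) mod n"
  by (metis mod_add_eq mod_mult_right_eq)

lemma red_mmul_left: "red n (mmul (red n a) b) = red n (mmul a b)"
  by (cases a; cases b) (simp add: modaux1)

lemma red_mmul_right: "red n (mmul a (red n b)) = red n (mmul a b)"
  by (cases a; cases b) (simp add: modaux2)

lemma red_minv: "red n (minv (red n a)) = red n (minv a)"
  by (cases a) (simp add: mod_minus_eq)

lemma red3_red9[simp]: "red 3 (red 9 a) = red 3 a"
proof -
  have "(x mod 9) mod 3 = x mod 3" for x :: int
    by (rule mod_mod_cancel) simp
  then show ?thesis by (cases a) simp
qed

lemma mneg_eq: "mneg g = mmul (-1,0,0,-1) g"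
  by (cases g) simp


definition base :: "hpt \<Rightarrow> bool" where
  "base t \<longleftrightarrow> t = Cusp None \<or> (\<exists>z. t = Inner z \<and> Im z > 0)"

lemma den_nz:
  assumes "Im z > 0" "(c,d) \<noteq> (0::int,0::int)"
  shows "of_int c * z + of_int d \<noteq> 0"
proof
  assume h: "of_int c * z + of_int d = 0"
  then have "Im (of_int c * z + of_int d) = 0" by simp
  then have "c = 0" using assms(1) by simp
  with h assms(2) show False by simp
qed

lemma SL2Z_cd: "(a,b,c,d) \<in> SL2Z \<Longrightarrow> (c,d) \<noteq> (0,0)"
  by (auto simp: SL2Z_def)

lemma divdiv: "(D::'a::field) \<noteq> 0 \<Longrightarrow> (A / D) / (B / D) = A / B"
  by (cases "B = 0") (simp_all add: field_simps)

lemma act_comp: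
  assumes "base t" "g \<in> SL2Z" "h \<in> SL2Z"
  shows "act g (act h t) = act (mmul g h) t"
proof -
  obtain a b c d where g: "g = (a,b,c,d)" by (cases g) auto
  obtain e f p q where h: "h = (e,f,p,q)" by (cases h) auto
  from assms(3) h have dh: "e*q - f*p = 1" by (simp add: SL2Z_def)
  from assms(1) consider "t = Cusp None" | z where "t = Inner z" "Im z > 0"
    unfolding base_def by blast
  then show ?thesis
  proof cases
    case 1
    show ?thesis
    proof (cases "p = 0")
      case True
      then have "e \<noteq> 0" using dh by auto
      then show ?thesis using True by (simp add: 1 g h)
    next
      case False
      have e1: "(of_int c * (of_int e / of_int p) + of_int d = (0::rat)) \<longleftrightarrow> c*e + d*p = 0"
      proof -
        have "of_int c * (of_int e / of_int p) + of_int d = (of_int (c*e+d*p) / of_int p :: rat)"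
          using False by (simp add: field_simps)
        then show ?thesis using False by (metis divide_eq_0_iff of_int_eq_0_iff)
      qed
      have e2: "(of_int a * (of_int e / of_int p) + of_int b) / (of_int c * (of_int e / of_int p) + of_int d)
           = (of_int (a*e+b*p) / of_int (c*e+d*p) :: rat)"
      proof -
        have "of_int a * (of_int e / of_int p) + of_int b = (of_int (a*e+b*p) / of_int p :: rat)"
          "of_int c * (of_int e / of_int p) + of_int d = (of_int (c*e+d*p) / of_int p :: rat)"
          using False by (simp_all add: field_simps)
        then show ?thesis using False by (simp add: divdiv)
      qed
      show ?thesis using False e1 e2 by (simp add: 1 g h)
    qed
  next
    case 2
    have D: "of_int p * z + of_int q \<noteq> 0"
      using den_nz[OF 2(2)] SL2Z_cd assms(3) h by blast
    have "(of_int a * ((of_int e * z + of_int f) / (of_int p * z + of_int q)) + of_int b) /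
          (of_int c * ((of_int e * z + of_int f) / (of_int p * z + of_int q)) + of_int d)
        = (of_int (a*e+b*p) * z + of_int (a*f+b*q)) / (of_int (c*e+d*p) * z + of_int (c*f+d*q))"
    proof -
      have "of_int a * ((of_int e * z + of_int f) / (of_int p * z + of_int q)) + of_int b
           = (of_int (a*e+b*p) * z + of_int (a*f+b*q)) / (of_int p * z + of_int q)"
        "of_int c * ((of_int e * z + of_int f) / (of_int p * z + of_int q)) + of_int d
           = (of_int (c*e+d*p) * z + of_int (c*f+d*q)) / (of_int p * z + of_int q)"
        using D by (simp_all add: field_simps)
      then show ?thesis using D by (simp add: divdiv)
    qed
    then show ?thesis by (simp add: 2 g h)
  qed
qed

lemma act_one: "base t \<Longrightarrow> act mone t = t"
  by (auto simp: base_def mone_def)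

lemma act_mneg: "base t \<Longrightarrow> act (mneg g) t = act g t"
proof -
  assume "base t"
  obtain a b c d where g: "g = (a,b,c,d)" by (cases g) auto
  have "(- (of_int a * z) - of_int b) / (- (of_int c * z) - of_int d) =
        (of_int a * z + of_int b) / (of_int c * z + of_int d)" for z :: complex
  proof -
    have "(- (of_int a * z) - of_int b) = - (of_int a * z + of_int b)"
      "(- (of_int c * z) - of_int d) = - (of_int c * z + of_int d)" by simp_all
    then show ?thesis by (simp only: minus_divide_divide)
  qed
  then show ?thesis using \<open>base t\<close> by (auto simp: base_def g)
qed

definition Stab :: "hpt \<Rightarrow> mat2 set" where
  "Stab t = {s \<in> SL2Z. act s t = t}"

lemma act_eq_iff:
  assumes "base t" "g \<in> SL2Z" "h \<in> SL2Z"
  shows "act g t = act h t \<longleftrightarrow> mmul (minv h) g \<in> Stab t"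
proof
  assume e: "act g t = act h t"
  have "act (mmul (minv h) g) t = act (minv h) (act g t)"
    using act_comp assms SL2Z_minv by metis
  also have "\<dots> = act (mmul (minv h) h) t" using e act_comp assms SL2Z_minv by metis
  also have "\<dots> = t" using minv_mmul_cancel assms act_one by simp
  finally show "mmul (minv h) g \<in> Stab t"
    using assms by (simp add: Stab_def SL2Z_mmul SL2Z_minv)
next
  assume s: "mmul (minv h) g \<in> Stab t"
  have "g = mmul h (mmul (minv h) g)"
    using assms by (simp add: mmul_assoc[symmetric] minv_mmul_cancel)
  have sS: "mmul (minv h) g \<in> SL2Z" using s by (simp add: Stab_def)
  have "act h (act (mmul (minv h) g) t) = act (mmul h (mmul (minv h) g)) t"
    by (rule act_comp[OF assms(1) assms(3) sS])
  then have "act g t = act h (act (mmul (minv h) g) t)"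
    using \<open>g = _\<close> by simp
  then show "act g t = act h t" using s by (simp add: Stab_def)
qed

lemma Stab_mmul: "base t \<Longrightarrow> s \<in> Stab t \<Longrightarrow> u \<in> Stab t \<Longrightarrow> mmul s u \<in> Stab t"
  by (simp add: Stab_def SL2Z_mmul act_comp[symmetric])

lemma Stab_minv: "base t \<Longrightarrow> s \<in> Stab t \<Longrightarrow> minv s \<in> Stab t"
  using act_eq_iff[of t mone s] by (simp add: Stab_def SL2Z_minv SL2Z_mone act_one)

lemma Stab_one: "base t \<Longrightarrow> mone \<in> Stab t"
  by (simp add: Stab_def SL2Z_mone act_one)


lemma base_cinf: "base cinf" by (simp add: base_def cinf_def)
lemma base_pti: "base (pti k)" by (simp add: base_def pti_def)
lemma base_rho: "base rho" by (simp add: base_def rho_def)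

lemma sq1: "(x::int) * x + y * y = 1 \<Longrightarrow> (x = 0 \<and> (y = 1 \<or> y = -1)) \<or> (y = 0 \<and> (x = 1 \<or> x = -1))"
proof -
  assume h: "x * x + y * y = 1"
  have "x*x \<ge> 0" "y*y \<ge> 0" by simp_all
  have "\<bar>x\<bar> \<le> 1"
  proof (rule ccontr)
    assume "\<not> \<bar>x\<bar> \<le> 1"
    then have "\<bar>x\<bar> * \<bar>x\<bar> \<ge> 2 * 2" by (intro mult_mono) auto
    then show False using h \<open>y*y \<ge> 0\<close> by (simp add: abs_mult[symmetric])
  qed
  moreover have "\<bar>y\<bar> \<le> 1"
  proof (rule ccontr)
    assume "\<not> \<bar>y\<bar> \<le> 1"
    then have "\<bar>y\<bar> * \<bar>y\<bar> \<ge> 2 * 2" by (intro mult_mono) auto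
    then show False using h \<open>x*x \<ge> 0\<close> by (simp add: abs_mult[symmetric])
  qed
  ultimately have "x \<in> {-1,0,1}" "y \<in> {-1,0,1}" by auto
  then show ?thesis using h by auto
qed

lemma sqle1: "(x::int) * x \<le> 1 \<Longrightarrow> x \<in> {-1,0,1}"
proof -
  assume h: "x * x \<le> 1"
  have "\<bar>x\<bar> \<le> 1"
  proof (rule ccontr)
    assume "\<not> \<bar>x\<bar> \<le> 1"
    then have "\<bar>x\<bar> * \<bar>x\<bar> \<ge> 2 * 2" by (intro mult_mono) auto
    then show False using h by (simp add: abs_mult[symmetric])
  qed
  then show ?thesis by auto
qed

lemma Stab_i_char:
  assumes "s \<in> Stab (pti 0)"
  shows "s \<in> {(1,0,0,1),(0,-1,1,0),(-1,0,0,-1),(0,1,-1,0)}"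
proof -
  obtain a b c d where s: "s = (a,b,c,d)" by (cases s) auto
  have sl: "a*d - b*c = 1" using assms s by (simp add: Stab_def SL2Z_def)
  let ?i = "Complex 0 1"
  have e: "(of_int a * ?i + of_int b) / (of_int c * ?i + of_int d) = ?i"
    using assms s by (simp add: Stab_def pti_def)
  have nz: "of_int c * ?i + of_int d \<noteq> 0"
  proof -
    have "(c,d) \<noteq> (0,0)" using sl by auto
    then show ?thesis using den_nz[of ?i c d] by simp
  qed
  have "of_int a * ?i + of_int b = ?i * (of_int c * ?i + of_int d)"
    using e nz by (simp add: divide_eq_eq)
  then have "b = -c" "a = d" by (simp_all add: complex_eq_iff)
  then have "a*a + c*c = 1" using sl by (simp add: algebra_simps)
  from sq1[OF this] show ?thesis using \<open>b = -c\<close> \<open>a = d\<close> s by auto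
qed

lemma Stab_rho_char:
  assumes "s \<in> Stab rho"
  shows "s \<in> {(1,0,0,1),(-1,0,0,-1),(-1,-1,1,0),(1,1,-1,0),(0,-1,1,1),(0,1,-1,-1)}"
proof -
  obtain a b c d where s: "s = (a,b,c,d)" by (cases s) auto
  have sl: "a*d - b*c = 1" using assms s by (simp add: Stab_def SL2Z_def)
  define w where "w = Complex (-1/2) (sqrt 3 / 2)"
  have imw: "Im w > 0" by (simp add: w_def)
  have e: "(of_int a * w + of_int b) / (of_int c * w + of_int d) = w"
    using assms s by (simp add: Stab_def rho_def w_def)
  have nz: "of_int c * w + of_int d \<noteq> 0"
  proof -
    have "(c,d) \<noteq> (0,0)" using sl by auto
    then show ?thesis using den_nz[OF imw, of c d] by simp
  qed
  have eq: "of_int a * w + of_int b = w * (of_int c * w + of_int d)"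
    using e nz by (simp add: divide_eq_eq)
  have s3: "sqrt 3 * sqrt 3 = (3::real)" by simp
  have "Im (of_int a * w + of_int b) = Im (w * (of_int c * w + of_int d))" using eq by simp
  then have "a * sqrt 3 / 2 = (d - c) * sqrt 3 / 2"
    by (simp add: w_def algebra_simps)
  then have ad: "a = d - c" by simp
  have "Re (of_int a * w + of_int b) = Re (w * (of_int c * w + of_int d))" using eq by simp
  then have "- a / 2 + b = c * (1/4 - sqrt 3 * sqrt 3 / 4) - d / 2"
    by (simp add: w_def algebra_simps)
  then have "- a / 2 + b = - c / 2 - d / 2" using s3 by simp
  then have "real_of_int (2*b) = real_of_int (a - c - d)" by simp
  then have bc: "b = -c" using ad by linarith
  have q: "d*d - c*d + c*c = 1" using sl ad bc by (simp add: algebra_simps)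
  have "(2*d - c)*(2*d-c) + 3*(c*c) = 4" using q by (simp add: algebra_simps)
  then have "c*c \<le> 1" by (smt (verit) zero_le_square)
  then have "c \<in> {-1,0,1}" by (rule sqle1)
  then have "(c = 0 \<and> (d = 1 \<or> d = -1)) \<or> (c = 1 \<and> (d = 0 \<or> d = 1)) \<or> (c = -1 \<and> (d = 0 \<or> d = -1))"
  proof -
    from \<open>c \<in> {-1,0,1}\<close> consider "c = -1" | "c = 0" | "c = 1" by auto
    then show ?thesis
    proof cases
      case 1 then have "d*(d+1) = 0" using q by (simp add: algebra_simps)
      then show ?thesis using 1 by auto
    next
      case 2 then have "d*d + 0*0 = 1" using q by simp
      then show ?thesis using 2 sq1[of d 0] by auto
    next
      case 3 then have "d*(d-1) = 0" using q by (simp add: algebra_simps)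
      then show ?thesis using 3 by auto
    qed
  qed
  then show ?thesis using ad bc s by auto
qed

lemma Stab_cinf_char:
  assumes "s \<in> Stab cinf"
  shows "\<exists>n. s = (1,n,0,1) \<or> s = (-1,n,0,-1)"
proof -
  obtain a b c d where s: "s = (a,b,c,d)" by (cases s) auto
  have sl: "a*d - b*c = 1" using assms s by (simp add: Stab_def SL2Z_def)
  have "c = 0" using assms s by (simp add: Stab_def cinf_def split: if_splits)
  then have "a * d = 1" using sl by simp
  then have "(a = 1 \<and> d = 1) \<or> (a = -1 \<and> d = -1)" using zmult_eq_1_iff by auto
  then show ?thesis using s \<open>c = 0\<close> by auto
qed


definition Gam :: "(mat2 \<Rightarrow> bool) \<Rightarrow> mat2 set" where
  "Gam P = {g \<in> SL2Z. P (red 9 g)}"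

definition gpred :: "(mat2 \<Rightarrow> bool) \<Rightarrow> bool" where
  "gpred P \<longleftrightarrow> P (1,0,0,1) \<and> P (8,0,0,8) \<and> (\<forall>m m'. P m \<longrightarrow> P m' \<longrightarrow> P (red 9 (mmul m m')))
      \<and> (\<forall>m. P m \<longrightarrow> P (red 9 (minv m)))"

lemma mmul_minv_left2: "g \<in> SL2Z \<Longrightarrow> mmul (minv g) (mmul g x) = x"
  by (simp add: mmul_assoc[symmetric] minv_mmul_cancel)
lemma mmul_minv_right2: "g \<in> SL2Z \<Longrightarrow> mmul g (mmul (minv g) x) = x"
  by (simp add: mmul_assoc[symmetric] minv_mmul_cancel)

lemma Gam_SL: "Gam P \<subseteq> SL2Z" by (auto simp: Gam_def)

lemma Gam_mmul: "gpred P \<Longrightarrow> g \<in> Gam P \<Longrightarrow> h \<in> Gam P \<Longrightarrow> mmul g h \<in> Gam P"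
proof -
  assume a: "gpred P" "g \<in> Gam P" "h \<in> Gam P"
  have "P (red 9 (mmul (red 9 g) (red 9 h)))" using a unfolding Gam_def gpred_def by blast
  then have "P (red 9 (mmul g h))" by (simp add: red_mmul_left red_mmul_right)
  then show ?thesis using a by (simp add: Gam_def SL2Z_mmul)
qed

lemma Gam_minv: "gpred P \<Longrightarrow> g \<in> Gam P \<Longrightarrow> minv g \<in> Gam P"
proof -
  assume a: "gpred P" "g \<in> Gam P"
  have "P (red 9 (minv (red 9 g)))" using a unfolding Gam_def gpred_def by blast
  then have "P (red 9 (minv g))" by (simp add: red_minv)
  then show ?thesis using a by (simp add: Gam_def SL2Z_minv)
qed

lemma Gam_mone: "gpred P \<Longrightarrow> mone \<in> Gam P"
  unfolding Gam_def gpred_def by (simp add: SL2Z_def mone_def)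

lemma Gam_negone: "gpred P \<Longrightarrow> (-1,0,0,-1) \<in> Gam P"
  unfolding Gam_def gpred_def by (simp add: SL2Z_def)

lemma Gam_mneg: "gpred P \<Longrightarrow> g \<in> Gam P \<Longrightarrow> mneg g \<in> Gam P"
proof -
  assume a: "gpred P" "g \<in> Gam P"
  have "mmul (-1,0,0,-1) g \<in> Gam P" by (rule Gam_mmul[OF a(1) Gam_negone[OF a(1)] a(2)])
  then show ?thesis by (simp add: mneg_eq)
qed

lemma Gam_true: "Gam (\<lambda>_. True) = SL2Z" by (auto simp: Gam_def)

lemma gpred_true: "gpred (\<lambda>_. True)" by (simp add: gpred_def)

lemma Gam_mono: "(\<And>m. P m \<Longrightarrow> Q m) \<Longrightarrow> Gam P \<subseteq> Gam Q"
  by (auto simp: Gam_def)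

lemma red_cong_mid: "red 9 w = red 9 s \<Longrightarrow> red 9 (mmul (mmul h w) x) = red 9 (mmul (mmul h s) x)"
proof -
  assume a: "red 9 w = red 9 s"
  have "red 9 (mmul h w) = red 9 (mmul h (red 9 w))" by (simp add: red_mmul_right)
  also have "\<dots> = red 9 (mmul h s)" by (simp add: a red_mmul_right)
  finally have e: "red 9 (mmul h w) = red 9 (mmul h s)" .
  have "red 9 (mmul (mmul h w) x) = red 9 (mmul (red 9 (mmul h w)) x)" by (simp add: red_mmul_left)
  also have "\<dots> = red 9 (mmul (mmul h s) x)" by (simp add: e red_mmul_left)
  finally show ?thesis .
qed

definition stabdata :: "hpt \<Rightarrow> mat2 list \<Rightarrow> bool" where
  "stabdata t SW \<longleftrightarrow> base t \<and> set SW \<subseteq> Stab t \<and> (\<forall>s\<in>Stab t. \<exists>w\<in>set SW. red 9 w = red 9 s)"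

lemma orb_act:
  assumes "base t" "G \<subseteq> SL2Z" "g \<in> SL2Z"
  shows "orb G (act g t) = {act (mmul y g) t | y. y \<in> G}"
proof -
  have h: "y \<in> G \<Longrightarrow> act y (act g t) = act (mmul y g) t" for y
    using assms act_comp[of t y g] by auto
  show ?thesis unfolding orb_def
  proof (rule set_eqI)
    fix x
    show "x \<in> {act ga (act g t) |ga. ga \<in> G} \<longleftrightarrow> x \<in> {act (mmul y g) t |y. y \<in> G}"
    proof
      assume "x \<in> {act ga (act g t) |ga. ga \<in> G}"
      then obtain y where y: "y \<in> G" "x = act y (act g t)" by blast
      then have "x = act (mmul y g) t" using h by simp
      then show "x \<in> {act (mmul y g) t |y. y \<in> G}" using y(1) by blast
    next
      assume "x \<in> {act (mmul y g) t |y. y \<in> G}"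
      then obtain y where y: "y \<in> G" "x = act (mmul y g) t" by blast
      then have "x = act y (act g t)" using h by simp
      then show "x \<in> {act ga (act g t) |ga. ga \<in> G}" using y(1) by blast
    qed
  qed
qed

lemma orb_eq_by:
  assumes "base t" "gpred P" "g \<in> SL2Z" "h \<in> SL2Z" "d \<in> Gam P" "act g t = act (mmul d h) t"
  shows "orb (Gam P) (act g t) = orb (Gam P) (act h t)"
proof -
  have SL: "Gam P \<subseteq> SL2Z" by (rule Gam_SL)
  have dS: "d \<in> SL2Z" using assms(5) SL by auto
  show ?thesis
  proof (simp only: orb_act[OF assms(1) SL assms(3)] orb_act[OF assms(1) SL assms(4)], intro equalityI subsetI)
    fix x assume "x \<in> {act (mmul y g) t |y. y \<in> Gam P}"
    then obtain y where y: "y \<in> Gam P" "x = act (mmul y g) t" by blast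
    have yS: "y \<in> SL2Z" using y SL by auto
    have "x = act y (act g t)" using y(2) act_comp[OF assms(1) yS assms(3)] by simp
    also have "\<dots> = act y (act (mmul d h) t)" using assms by simp
    also have "\<dots> = act (mmul y (mmul d h)) t"
      by (rule act_comp[OF assms(1) yS SL2Z_mmul[OF dS assms(4)]])
    also have "\<dots> = act (mmul (mmul y d) h) t" by (simp add: mmul_assoc)
    finally show "x \<in> {act (mmul y h) t |y. y \<in> Gam P}" using Gam_mmul[OF assms(2) y(1) assms(5)] by blast
  next
    fix x assume "x \<in> {act (mmul y h) t |y. y \<in> Gam P}"
    then obtain y where y: "y \<in> Gam P" "x = act (mmul y h) t" by blast
    have yS: "y \<in> SL2Z" using y SL by auto
    have y': "mmul y (minv d) \<in> Gam P" using Gam_mmul[OF assms(2) y(1) Gam_minv[OF assms(2,5)]] .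
    have "mmul y h = mmul (mmul y (minv d)) (mmul d h)"
      by (simp add: mmul_assoc mmul_minv_left2 dS)
    have y'S: "mmul y (minv d) \<in> SL2Z" using y' SL by blast
    have "x = act (mmul y (minv d)) (act (mmul d h) t)"
      using y(2) \<open>mmul y h = _\<close> act_comp[OF assms(1) y'S SL2Z_mmul[OF dS assms(4)]] by simp
    also have "\<dots> = act (mmul y (minv d)) (act g t)" using assms by simp
    also have "\<dots> = act (mmul (mmul y (minv d)) g) t" by (rule act_comp[OF assms(1) y'S assms(3)])
    finally show "x \<in> {act (mmul y g) t |y. y \<in> Gam P}" using y' by blast
  qed
qed

lemma orb_eq_stab:
  assumes "base t" "gpred P" "g \<in> SL2Z" "h \<in> SL2Z" "s \<in> Stab t"
    "P (red 9 (mmul (mmul h s) (minv g)))"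
  shows "orb (Gam P) (act g t) = orb (Gam P) (act h t)"
proof -
  have sS: "s \<in> SL2Z" using assms(5) by (simp add: Stab_def)
  define d where "d = minv (mmul (mmul h s) (minv g))"
  have dG: "d \<in> Gam P" unfolding d_def
    by (rule Gam_minv[OF assms(2)]) (simp add: Gam_def assms SL2Z_mmul SL2Z_minv sS)
  have dS: "d \<in> SL2Z" using dG Gam_SL by auto
  have "mmul (minv (mmul d h)) g = s"
    by (simp add: d_def minv_mmul mmul_assoc minv_mmul_cancel assms sS mmul_minv_left2)
  then have "act g t = act (mmul d h) t"
    using act_eq_iff[OF assms(1,3)] SL2Z_mmul dS assms(4,5) by simp
  then show ?thesis using orb_eq_by[OF assms(1-4) dG] by simp
qed

lemma orb_neq:
  assumes "stabdata t SW" "gpred P" "g \<in> SL2Z" "h \<in> SL2Z"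
    "\<forall>w\<in>set SW. \<not> P (red 9 (mmul (mmul h w) (minv g)))"
  shows "orb (Gam P) (act g t) \<noteq> orb (Gam P) (act h t)"
proof
  have bt: "base t" using assms(1) by (simp add: stabdata_def)
  assume e: "orb (Gam P) (act g t) = orb (Gam P) (act h t)"
  have "act g t = act (mmul mone g) t" by simp
  then have "act g t \<in> orb (Gam P) (act g t)"
    unfolding orb_act[OF bt Gam_SL assms(3)] using Gam_mone[OF assms(2)] by blast
  then obtain y where y: "y \<in> Gam P" "act g t = act (mmul y h) t"
    using e orb_act[OF bt Gam_SL assms(4)] by auto
  have yS: "y \<in> SL2Z" using y Gam_SL by auto
  define s where "s = mmul (minv (mmul y h)) g"
  have sSt: "s \<in> Stab t" unfolding s_def
    using act_eq_iff[OF bt assms(3) SL2Z_mmul[OF yS assms(4)]] y(2) by simp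
  have "mmul (mmul h s) (minv g) = minv y"
    by (simp add: s_def minv_mmul mmul_assoc minv_mmul_cancel assms yS mmul_minv_right2)
  then have Ps: "P (red 9 (mmul (mmul h s) (minv g)))"
    using Gam_minv[OF assms(2) y(1)] by (simp add: Gam_def)
  obtain w where w: "w \<in> set SW" "red 9 w = red 9 s"
    using assms(1) sSt by (auto simp: stabdata_def)
  have "\<not> P (red 9 (mmul (mmul h w) (minv g)))" using assms(5) w(1) by blast
  moreover have "red 9 (mmul (mmul h w) (minv g)) = red 9 (mmul (mmul h s) (minv g))"
    by (rule red_cong_mid[OF w(2)])
  ultimately show False using Ps by simp
qed


lemma gpred_mult: "gpred P \<Longrightarrow> P m \<Longrightarrow> P m' \<Longrightarrow> P (red 9 (mmul m m'))"
  unfolding gpred_def by blast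
lemma gpred_minv: "gpred P \<Longrightarrow> P m \<Longrightarrow> P (red 9 (minv m))"
  unfolding gpred_def by blast
lemma gpred_one: "gpred P \<Longrightarrow> P (1,0,0,1)"
  unfolding gpred_def by blast

lemma Tpow:
  assumes "Q h" "h \<in> SL2Z"
    and T: "\<And>h. h \<in> SL2Z \<Longrightarrow> Q h \<Longrightarrow> Q (mmul h (1,1,0,1))"
    and Ti: "\<And>h. h \<in> SL2Z \<Longrightarrow> Q h \<Longrightarrow> Q (mmul h (1,-1,0,1))"
  shows "Q (mmul h (1,k,0,1))"
proof (induction k rule: int_induct[where k=0])
  case base
  then show ?case using assms(1) by (simp add: mone_def[symmetric])
next
  case (step1 i)
  have "mmul h (1,i+1,0,1) = mmul (mmul h (1,i,0,1)) (1,1,0,1)"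
    by (simp add: mmul_assoc add.commute)
  moreover have "mmul h (1,i,0,1) \<in> SL2Z" by (rule SL2Z_mmul[OF assms(2)]) (simp add: SL2Z_def)
  ultimately show ?case using T step1 by simp
next
  case (step2 i)
  have "mmul h (1,i-1,0,1) = mmul (mmul h (1,i,0,1)) (1,-1,0,1)"
    by (simp add: mmul_assoc add.commute)
  moreover have "mmul h (1,i,0,1) \<in> SL2Z" by (rule SL2Z_mmul[OF assms(2)]) (simp add: SL2Z_def)
  ultimately show ?case using Ti step2 by simp
qed

lemma SL2Z_gen_induct:
  assumes one: "Q mone"
    and T: "\<And>h. h \<in> SL2Z \<Longrightarrow> Q h \<Longrightarrow> Q (mmul h (1,1,0,1))"
    and Ti: "\<And>h. h \<in> SL2Z \<Longrightarrow> Q h \<Longrightarrow> Q (mmul h (1,-1,0,1))"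
    and Si: "\<And>h. h \<in> SL2Z \<Longrightarrow> Q h \<Longrightarrow> Q (mmul h (0,1,-1,0))"
  shows "g \<in> SL2Z \<Longrightarrow> Q g"
proof -
  have main: "\<forall>a b c d. (a,b,c,d) \<in> SL2Z \<longrightarrow> nat \<bar>c\<bar> = n \<longrightarrow> Q (a,b,c,d)" for n
  proof (induction n rule: less_induct)
    case (less n)
    show ?case
    proof (intro allI impI)
      fix a b c d assume g: "(a,b,c,d) \<in> SL2Z" and n: "nat \<bar>c\<bar> = n"
      have det: "a*d - b*c = 1" using g by (simp add: SL2Z_def)
      show "Q (a,b,c,d)"
      proof (cases "c = 0")
        case True
        then have "a*d = 1" using det by simp
        then have "(a = 1 \<and> d = 1) \<or> (a = -1 \<and> d = -1)" using zmult_eq_1_iff by auto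
        then show ?thesis
        proof
          assume ad: "a = 1 \<and> d = 1"
          have "Q (mmul mone (1,b,0,1))" by (rule Tpow[OF one SL2Z_mone T Ti])
          then show ?thesis using ad True by (simp add: mone_def)
        next
          assume ad: "a = -1 \<and> d = -1"
          have s1: "mmul mone (0,1,-1,0) \<in> SL2Z" by (simp add: SL2Z_def mone_def)
          have "Q (mmul mone (0,1,-1,0))" by (rule Si[OF SL2Z_mone one])
          then have "Q (mmul (mmul mone (0,1,-1,0)) (0,1,-1,0))" by (rule Si[OF s1])
          then have q: "Q (-1,0,0,-1)" by (simp add: mone_def)
          have "Q (mmul (-1,0,0,-1) (1,-b,0,1))" by (rule Tpow[OF q _ T Ti]) (simp add: SL2Z_def)
          then show ?thesis using ad True by simp
        qed
      next
        case False
        define k where "k = - (d div c)"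
        define h where "h = mmul (a,b,c,d) (1,k,0,1)"
        have hS: "h \<in> SL2Z" unfolding h_def by (rule SL2Z_mmul[OF g]) (simp add: SL2Z_def)
        have h_eq: "h = (a, a*k+b, c, d mod c)"
          by (simp add: h_def k_def algebra_simps minus_div_mult_eq_mod[symmetric])
        define h' where "h' = mmul h (0,-1,1,0)"
        have h'S: "h' \<in> SL2Z" unfolding h'_def by (rule SL2Z_mmul[OF hS]) (simp add: SL2Z_def)
        have h'_eq: "h' = (a*k+b, -a, d mod c, -c)" by (simp add: h'_def h_eq)
        have lt: "\<bar>d mod c\<bar> < \<bar>c\<bar>"
        proof (cases "c > 0")
          case True then show ?thesis using pos_mod_bound[of c d] pos_mod_sign[of c d] by auto
        next
          case False then have "c < 0" using \<open>c \<noteq> 0\<close> by simp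
          then show ?thesis using neg_mod_bound[of c d] neg_mod_sign[of c d] by auto
        qed
        have "Q h'" using less.IH[of "nat \<bar>d mod c\<bar>"] lt n h'S h'_eq by auto
        then have "Q (mmul h' (0,1,-1,0))" by (rule Si[OF h'S])
        moreover have "mmul h' (0,1,-1,0) = h" by (simp add: h'_def mmul_assoc mone_def[symmetric])
        ultimately have "Q h" by simp
        then have "Q (mmul h (1,-k,0,1))" by (rule Tpow[OF _ hS T Ti])
        moreover have "mmul h (1,-k,0,1) = (a,b,c,d)" by (simp add: h_def mmul_assoc mone_def[symmetric])
        ultimately show ?thesis by simp
      qed
    qed
  qed
  assume "g \<in> SL2Z"
  then show "Q g" using main by (cases g) auto
qed

lemma list_all2_ex: "list_all2 Q xs ys \<Longrightarrow> x \<in> set xs \<Longrightarrow> \<exists>y\<in>set ys. Q x y"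
proof -
  assume a: "list_all2 Q xs ys" "x \<in> set xs"
  then obtain i where i: "i < length xs" "x = xs ! i" by (auto simp: in_set_conv_nth)
  have "i < length ys" "Q (xs ! i) (ys ! i)" using a(1) i(1) by (auto simp: list_all2_conv_all_nth)
  then show ?thesis using i(2) nth_mem by blast
qed

definition cover :: "(mat2 \<Rightarrow> bool) \<Rightarrow> mat2 list \<Rightarrow> bool" where
  "cover P R \<longleftrightarrow> (\<forall>g\<in>SL2Z. \<exists>r\<in>set R. P (red 9 (mmul g (minv r))))"

lemma cover_step:
  assumes "gpred P" "h \<in> SL2Z" "r \<in> SL2Z" "P (red 9 (mmul h (minv r)))"
    "P (red 9 (mmul (mmul r X) (minv r')))"
  shows "P (red 9 (mmul (mmul h X) (minv r')))"
proof -
  have "mmul (mmul h X) (minv r') = mmul (mmul h (minv r)) (mmul (mmul r X) (minv r'))"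
    using assms(3) by (simp add: mmul_assoc mmul_minv_left2)
  then have "red 9 (mmul (mmul h X) (minv r')) =
      red 9 (mmul (red 9 (mmul h (minv r))) (red 9 (mmul (mmul r X) (minv r'))))"
    by (simp add: red_mmul_left red_mmul_right)
  moreover have "P (red 9 (mmul (red 9 (mmul h (minv r))) (red 9 (mmul (mmul r X) (minv r')))))"
    by (rule gpred_mult[OF assms(1,4,5)])
  ultimately show ?thesis by simp
qed

lemma cover_intro:
  assumes gp: "gpred P" and RS: "set R \<subseteq> SL2Z"
    and one: "\<exists>r\<in>set R. P (red 9 (minv r))"
    and cT: "list_all2 (\<lambda>r r'. P (red 9 (mmul (mmul r (1,1,0,1)) (minv r')))) R RT" "set RT \<subseteq> set R"
    and cTi: "list_all2 (\<lambda>r r'. P (red 9 (mmul (mmul r (1,-1,0,1)) (minv r')))) R RTi" "set RTi \<subseteq> set R"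
    and cS: "list_all2 (\<lambda>r r'. P (red 9 (mmul (mmul r (0,1,-1,0)) (minv r')))) R RS" "set RS \<subseteq> set R"
  shows "cover P R"
proof -
  let ?Q = "\<lambda>g. \<exists>r\<in>set R. P (red 9 (mmul g (minv r)))"
  have step: "?Q (mmul h X)" if th: "h \<in> SL2Z" "?Q h"
     "list_all2 (\<lambda>r r'. P (red 9 (mmul (mmul r X) (minv r')))) R RX" "set RX \<subseteq> set R" for h X RX
  proof -
    obtain r where r: "r \<in> set R" "P (red 9 (mmul h (minv r)))" using th(2) by blast
    obtain r' where r': "r' \<in> set RX" "P (red 9 (mmul (mmul r X) (minv r')))"
      using list_all2_ex[OF th(3) r(1)] by blast
    have "r \<in> SL2Z" using r RS by blast
    then show ?thesis using cover_step[OF gp th(1) _ r(2) r'(2)] r'(1) th(4) by blast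
  qed
  have "?Q g" if "g \<in> SL2Z" for g
  proof (rule SL2Z_gen_induct[OF _ _ _ _ that])
    show "?Q mone" using one by simp
  next
    fix h assume "h \<in> SL2Z" "?Q h" then show "?Q (mmul h (1,1,0,1))" by (rule step[OF _ _ cT])
  next
    fix h assume "h \<in> SL2Z" "?Q h" then show "?Q (mmul h (1,-1,0,1))" by (rule step[OF _ _ cTi])
  next
    fix h assume "h \<in> SL2Z" "?Q h" then show "?Q (mmul h (0,1,-1,0))" by (rule step[OF _ _ cS])
  qed
  then show ?thesis unfolding cover_def by blast
qed


lemma Gam_memI: "g \<in> SL2Z \<Longrightarrow> P (red 9 g) \<Longrightarrow> g \<in> Gam P" by (simp add: Gam_def)
lemma Gam_memD: "g \<in> Gam P \<Longrightarrow> P (red 9 g)" by (simp add: Gam_def)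
lemma Gam_memS: "g \<in> Gam P \<Longrightarrow> g \<in> SL2Z" by (simp add: Gam_def)

lemma Gam_sub: "(\<forall>m. P m \<longrightarrow> Q m) \<Longrightarrow> g \<in> Gam P \<Longrightarrow> g \<in> Gam Q"
  unfolding Gam_def by blast

lemma fiber_sub:
  assumes sd: "stabdata t SW" and gp': "gpred P'" and gpG: "gpred PG"
    and sub: "\<forall>m. P' m \<longrightarrow> PG m" and g0: "g0 \<in> SL2Z"
    and cov: "cover P' R" and RS: "set R \<subseteq> SL2Z" and XS: "set X \<subseteq> SL2Z"
    and Xin: "\<forall>x\<in>set X. PG (red 9 (mmul x (minv g0)))"
    and cls: "\<forall>r\<in>set R. PG (red 9 (mmul r (minv g0))) \<longrightarrow>
          (\<exists>x\<in>set X. \<exists>s\<in>set SW. P' (red 9 (mmul (mmul x s) (minv r))))"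
  shows "fiber (Gam P') (Gam PG) (act g0 t) = (\<lambda>x. orb (Gam P') (act x t)) ` set X"
proof -
  have bt: "base t" using sd by (simp add: stabdata_def)
  have SWS: "set SW \<subseteq> Stab t" using sd by (simp add: stabdata_def)
  have orbG: "orb (Gam PG) (act g0 t) = {act (mmul y g0) t | y. y \<in> Gam PG}"
    by (rule orb_act[OF bt Gam_SL g0])
  show ?thesis
  proof (rule set_eqI)
    fix Ob
    show "Ob \<in> fiber (Gam P') (Gam PG) (act g0 t) \<longleftrightarrow> Ob \<in> (\<lambda>x. orb (Gam P') (act x t)) ` set X"
    proof
      assume "Ob \<in> fiber (Gam P') (Gam PG) (act g0 t)"
      then obtain z where z: "Ob = orb (Gam P') z" "z \<in> orb (Gam PG) (act g0 t)"
        unfolding fiber_def by blast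
      then obtain y where y: "y \<in> Gam PG" "z = act (mmul y g0) t" using orbG by blast
      define g where "g = mmul y g0"
      have gS: "g \<in> SL2Z" unfolding g_def using Gam_memS[OF y(1)] g0 by (rule SL2Z_mmul)
      obtain r where r: "r \<in> set R" "P' (red 9 (mmul g (minv r)))"
        using cov gS unfolding cover_def by blast
      have rS: "r \<in> SL2Z" using r RS by blast
      define ga where "ga = mmul g (minv r)"
      have gaG: "ga \<in> Gam P'" unfolding ga_def
        by (rule Gam_memI[where P="P'", OF SL2Z_mmul[OF gS SL2Z_minv[OF rS]] r(2)])
      have "mmul r (minv g0) = mmul (minv ga) y"
        using Gam_memS[OF y(1)]
        by (simp add: ga_def g_def minv_mmul mmul_assoc minv_mmul_cancel g0 mmul_minv_right2)
      moreover have "mmul (minv ga) y \<in> Gam PG"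
        by (rule Gam_mmul[OF gpG Gam_sub[OF sub Gam_minv[OF gp' gaG]] y(1)])
      ultimately have "PG (red 9 (mmul r (minv g0)))" by (simp add: Gam_def)
      then obtain x s where xs: "x \<in> set X" "s \<in> set SW" "P' (red 9 (mmul (mmul x s) (minv r)))"
        using cls r(1) by blast
      have xS: "x \<in> SL2Z" using xs XS by blast
      have e1: "orb (Gam P') (act g t) = orb (Gam P') (act r t)"
      proof (rule orb_eq_stab[OF bt gp' gS rS Stab_one[OF bt]])
        have "mmul (mmul r mone) (minv g) = minv ga" by (simp add: ga_def minv_mmul)
        then show "P' (red 9 (mmul (mmul r mone) (minv g)))"
          using Gam_memD[OF Gam_minv[OF gp' gaG]] by simp
      qed
      have e2: "orb (Gam P') (act r t) = orb (Gam P') (act x t)"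
        by (rule orb_eq_stab[OF bt gp' rS xS _ xs(3)]) (use xs(2) SWS in blast)
      have "Ob = orb (Gam P') (act x t)" using z(1) y(2) e1 e2 by (simp add: g_def)
      then show "Ob \<in> (\<lambda>x. orb (Gam P') (act x t)) ` set X" using xs(1) by blast
    next
      assume "Ob \<in> (\<lambda>x. orb (Gam P') (act x t)) ` set X"
      then obtain x where x: "x \<in> set X" "Ob = orb (Gam P') (act x t)" by blast
      have xS: "x \<in> SL2Z" using x XS by blast
      have yG: "mmul x (minv g0) \<in> Gam PG"
        by (rule Gam_memI[OF SL2Z_mmul[OF xS SL2Z_minv[OF g0]]]) (use Xin x(1) in blast)
      have "mmul (mmul x (minv g0)) g0 = x" by (simp add: mmul_assoc minv_mmul_cancel g0)
      then have "act x t \<in> orb (Gam PG) (act g0 t)" using orbG yG by (metis (mono_tags, lifting) mem_Collect_eq)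
      then show "Ob \<in> fiber (Gam P') (Gam PG) (act g0 t)" using x(2) unfolding fiber_def by blast
    qed
  qed
qed

lemma card_orbs:
  assumes sd: "stabdata t SW" and gp': "gpred P'" and XS: "set X \<subseteq> SL2Z" and dX: "distinct X"
    and pw: "\<forall>x\<in>set X. \<forall>y\<in>set X. x \<noteq> y \<longrightarrow> (\<forall>w\<in>set SW. \<not> P' (red 9 (mmul (mmul y w) (minv x))))"
  shows "card ((\<lambda>x. orb (Gam P') (act x t)) ` set X) = length X"
proof -
  have "inj_on (\<lambda>x. orb (Gam P') (act x t)) (set X)"
  proof (rule inj_onI, rule ccontr)
    fix x y assume xy: "x \<in> set X" "y \<in> set X" "orb (Gam P') (act x t) = orb (Gam P') (act y t)" "x \<noteq> y"
    have "orb (Gam P') (act x t) \<noteq> orb (Gam P') (act y t)"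
      by (rule orb_neq[OF sd gp']) (use xy XS pw in blast)+
    then show False using xy(3) by simp
  qed
  then show ?thesis using dX by (simp add: card_image distinct_card)
qed


definition mconj :: "mat2 \<Rightarrow> mat2 \<Rightarrow> mat2" where
  "mconj g s = mmul (mmul g s) (minv g)"

definition L0 :: "(mat2 \<Rightarrow> bool) \<Rightarrow> hpt \<Rightarrow> mat2 \<Rightarrow> mat2 set" where
  "L0 P t g = {s \<in> Stab t. P (red 9 (mconj g s))}"

lemma conj_SL: "g \<in> SL2Z \<Longrightarrow> s \<in> SL2Z \<Longrightarrow> mconj g s \<in> SL2Z"
  unfolding mconj_def by (intro SL2Z_mmul SL2Z_minv)

lemma conj_mmul: "g \<in> SL2Z \<Longrightarrow> mmul (mconj g s) (mconj g u) = mconj g (mmul s u)"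
  unfolding mconj_def by (simp add: mmul_assoc mmul_minv_left2)

lemma conj_minv: "mconj g (minv s) = minv (mconj g s)"
  unfolding mconj_def by (simp add: minv_mmul mmul_assoc)

lemma conj_inj: "g \<in> SL2Z \<Longrightarrow> mconj g s = mconj g u \<Longrightarrow> s = u"
proof -
  assume g: "g \<in> SL2Z" and e: "mconj g s = mconj g u"
  have "s = mmul (minv g) (mmul (mconj g s) g)"
    using g by (simp add: mconj_def mmul_assoc minv_mmul_cancel mmul_minv_left2)
  also have "\<dots> = mmul (minv g) (mmul (mconj g u) g)" using e by simp
  also have "\<dots> = u" using g by (simp add: mconj_def mmul_assoc minv_mmul_cancel mmul_minv_left2)
  finally show ?thesis .
qed

lemma stab_conj:
  assumes bt: "base t" and gp: "gpred P" and g: "g \<in> SL2Z"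
  shows "stab (Gam P) (act g t) = mconj g ` L0 P t g"
proof (rule set_eqI)
  fix h
  show "h \<in> stab (Gam P) (act g t) \<longleftrightarrow> h \<in> mconj g ` L0 P t g"
  proof
    assume "h \<in> stab (Gam P) (act g t)"
    then have hG: "h \<in> Gam P" and ha: "act h (act g t) = act g t" by (auto simp: stab_def)
    have hS: "h \<in> SL2Z" using Gam_memS[OF hG] .
    have "act (mmul h g) t = act g t" using ha act_comp[OF bt hS g] by simp
    then have sSt: "mmul (minv g) (mmul h g) \<in> Stab t"
      using act_eq_iff[OF bt SL2Z_mmul[OF hS g] g] by simp
    have hc: "h = mconj g (mmul (minv g) (mmul h g))"
      using g by (simp add: mconj_def mmul_assoc minv_mmul_cancel mmul_minv_right2)
    have "P (red 9 h)" using Gam_memD[OF hG] .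
    then have "mmul (minv g) (mmul h g) \<in> L0 P t g" using sSt hc by (simp add: L0_def)
    then show "h \<in> mconj g ` L0 P t g" using hc by blast
  next
    assume "h \<in> mconj g ` L0 P t g"
    then obtain s where s: "s \<in> Stab t" "P (red 9 (mconj g s))" "h = mconj g s"
      by (auto simp: L0_def)
    have sS: "s \<in> SL2Z" using s(1) by (simp add: Stab_def)
    have hS: "h \<in> SL2Z" using s(3) conj_SL[OF g sS] by simp
    have "mmul h g = mmul g s"
      using s(3) g by (simp add: mconj_def mmul_assoc minv_mmul_cancel)
    then have "act h (act g t) = act (mmul g s) t" using act_comp[OF bt hS g] by simp
    also have "\<dots> = act g (act s t)" using act_comp[OF bt g sS] by simp
    also have "\<dots> = act g t" using s(1) by (simp add: Stab_def)
    finally show "h \<in> stab (Gam P) (act g t)"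
      using hS s by (simp add: stab_def Gam_def)
  qed
qed

lemma pm_stab:
  assumes bt: "base t" and gp: "gpred P" and g: "g \<in> SL2Z"
  shows "pm (stab (Gam P) (act g t)) = stab (Gam P) (act g t)"
proof -
  have "mneg h \<in> stab (Gam P) (act g t)" if h: "h \<in> stab (Gam P) (act g t)" for h
  proof -
    have hG: "h \<in> Gam P" and ha: "act h (act g t) = act g t" using h by (auto simp: stab_def)
    have hS: "h \<in> SL2Z" using Gam_memS[OF hG] .
    have nG: "mneg h \<in> Gam P" by (rule Gam_mneg[OF gp hG])
    have nS: "mneg h \<in> SL2Z" using Gam_memS[OF nG] .
    have "act (mneg h) (act g t) = act (mmul (mneg h) g) t" using act_comp[OF bt nS g] by simp
    also have "mmul (mneg h) g = mneg (mmul h g)" by (cases h; cases g) simp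
    also have "act (mneg (mmul h g)) t = act (mmul h g) t" by (rule act_mneg[OF bt])
    also have "\<dots> = act h (act g t)" using act_comp[OF bt hS g] by simp
    finally show ?thesis using ha nG by (simp add: stab_def)
  qed
  then show ?thesis unfolding pm_def by blast
qed

lemma L0_one: "base t \<Longrightarrow> gpred P \<Longrightarrow> g \<in> SL2Z \<Longrightarrow> mone \<in> L0 P t g"
  by (simp add: L0_def mconj_def Stab_one minv_mmul_cancel gpred_one) (simp add: mone_def gpred_one)

lemma L0_mmul: "base t \<Longrightarrow> gpred P \<Longrightarrow> g \<in> SL2Z \<Longrightarrow> s \<in> L0 P t g \<Longrightarrow> u \<in> L0 P t g \<Longrightarrow> mmul s u \<in> L0 P t g"
proof -
  assume a: "base t" "gpred P" "g \<in> SL2Z" "s \<in> L0 P t g" "u \<in> L0 P t g"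
  have sS: "s \<in> Stab t" "u \<in> Stab t" using a(4,5) by (auto simp: L0_def)
  have "P (red 9 (mmul (red 9 (mconj g s)) (red 9 (mconj g u))))"
    by (rule gpred_mult[OF a(2)]) (use a(4,5) in \<open>auto simp: L0_def\<close>)
  then have "P (red 9 (mconj g (mmul s u)))"
    by (simp add: red_mmul_left red_mmul_right conj_mmul[OF a(3), symmetric])
  then show ?thesis using Stab_mmul[OF a(1) sS] by (simp add: L0_def)
qed

lemma L0_minv: "base t \<Longrightarrow> gpred P \<Longrightarrow> s \<in> L0 P t g \<Longrightarrow> minv s \<in> L0 P t g"
proof -
  assume a: "base t" "gpred P" "s \<in> L0 P t g"
  have sS: "s \<in> Stab t" using a(3) by (auto simp: L0_def)
  have "P (red 9 (minv (red 9 (mconj g s))))"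
    by (rule gpred_minv[OF a(2)]) (use a(3) in \<open>auto simp: L0_def\<close>)
  then have "P (red 9 (mconj g (minv s)))" by (simp add: red_minv conj_minv)
  then show ?thesis using Stab_minv[OF a(1) sS] by (simp add: L0_def)
qed

lemma L0_coset: "base t \<Longrightarrow> gpred P \<Longrightarrow> g \<in> SL2Z \<Longrightarrow> k \<in> L0 P t g \<Longrightarrow> mmul k ` L0 P t g = L0 P t g"
proof (rule set_eqI)
  fix x assume a: "base t" "gpred P" "g \<in> SL2Z" "k \<in> L0 P t g"
  have kS: "k \<in> SL2Z" using a(4) by (auto simp: L0_def Stab_def)
  show "x \<in> mmul k ` L0 P t g \<longleftrightarrow> x \<in> L0 P t g"
  proof
    assume "x \<in> mmul k ` L0 P t g" then show "x \<in> L0 P t g" using L0_mmul[OF a(1-4)] by blast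
  next
    assume x: "x \<in> L0 P t g"
    have "mmul (minv k) x \<in> L0 P t g" by (rule L0_mmul[OF a(1-3) L0_minv[OF a(1,2,4)] x])
    moreover have "x = mmul k (mmul (minv k) x)" using kS by (simp add: mmul_minv_right2)
    ultimately show "x \<in> mmul k ` L0 P t g" by blast
  qed
qed

lemma card_conj:
  assumes g: "g \<in> SL2Z"
  shows "card ((\<lambda>h. mmul h ` (mconj g ` K)) ` (mconj g ` L)) = card ((\<lambda>s. mmul s ` K) ` L)"
proof -
  have e: "(\<lambda>h. mmul h ` (mconj g ` K)) ` (mconj g ` L) = (\<lambda>X. mconj g ` X) ` ((\<lambda>s. mmul s ` K) ` L)"
  proof -
    have "mmul (mconj g s) ` (mconj g ` K) = mconj g ` (mmul s ` K)" for s
      by (simp add: image_image conj_mmul[OF g])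
    then show ?thesis by (simp add: image_image)
  qed
  have i: "inj (mconj g)" by (rule injI) (rule conj_inj[OF g])
  have "inj_on (\<lambda>X. mconj g ` X) ((\<lambda>s. mmul s ` K) ` L)"
    by (rule inj_onI) (simp add: inj_image_eq_iff[OF i])
  then show ?thesis using e by (simp add: card_image)
qed


lemma card_mod:
  assumes bt: "base t" and gp': "gpred P'" and g: "g \<in> SL2Z" and LS: "L \<subseteq> Stab t"
  shows "card ((\<lambda>s. mmul s ` L0 P' t g) ` L) =
         card ((\<lambda>m. (\<lambda>k. red 9 (mmul m k)) ` (red 9 ` L0 P' t g)) ` (red 9 ` L))"
proof -
  define K where "K = L0 P' t g"
  define F where "F m = (\<lambda>k. red 9 (mmul m k)) ` (red 9 ` K)" for m
  have KS: "K \<subseteq> Stab t" by (auto simp: K_def L0_def)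
  have e1: "(\<lambda>k. red 9 (mmul s k)) ` K = F (red 9 s)" for s
    by (simp add: F_def image_image red_mmul_left red_mmul_right)
  have e: "(\<lambda>m. F m) ` (red 9 ` L) = (\<lambda>X. red 9 ` X) ` ((\<lambda>s. mmul s ` K) ` L)"
    by (simp add: image_image e1)
  have one: "mone \<in> K" unfolding K_def by (rule L0_one[OF bt gp' g])
  have inj: "inj_on (\<lambda>X. red 9 ` X) ((\<lambda>s. mmul s ` K) ` L)"
  proof (rule inj_onI)
    fix X Y assume X: "X \<in> (\<lambda>s. mmul s ` K) ` L" and Y: "Y \<in> (\<lambda>s. mmul s ` K) ` L"
      and eq: "red 9 ` X = red 9 ` Y"
    obtain s where s: "s \<in> L" "X = mmul s ` K" using X by blast
    obtain u where u: "u \<in> L" "Y = mmul u ` K" using Y by blast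
    have sSt: "s \<in> Stab t" and uSt: "u \<in> Stab t" using s u LS by auto
    have "red 9 s \<in> red 9 ` X" using s(2) one by (simp add: image_iff) (metis mmul_one(2))
    then obtain k where k: "k \<in> K" "red 9 s = red 9 (mmul u k)" using eq u(2) by auto
    have kSt: "k \<in> Stab t" using k KS by auto
    have ukSt: "mmul u k \<in> Stab t" by (rule Stab_mmul[OF bt uSt kSt])
    have ukS: "mmul u k \<in> SL2Z" using ukSt by (simp add: Stab_def)
    define v where "v = mmul (minv (mmul u k)) s"
    have vSt: "v \<in> Stab t" unfolding v_def by (rule Stab_mmul[OF bt Stab_minv[OF bt ukSt] sSt])
    have "red 9 v = red 9 (mmul (minv (mmul u k)) (red 9 s))" by (simp add: v_def red_mmul_right)
    also have "\<dots> = red 9 (mmul (minv (mmul u k)) (mmul u k))" by (simp add: k(2) red_mmul_right)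
    also have "\<dots> = red 9 mone" using ukS by (simp add: minv_mmul_cancel)
    finally have rv: "red 9 v = red 9 mone" .
    have "red 9 (mconj g v) = red 9 (mconj g mone)"
      unfolding mconj_def by (rule red_cong_mid[OF rv])
    also have "\<dots> = (1,0,0,1)" using g by (simp add: mconj_def minv_mmul_cancel, simp add: mone_def)
    finally have "v \<in> K" using vSt gpred_one[OF gp'] by (simp add: K_def L0_def)
    then have kvK: "mmul k v \<in> K" unfolding K_def using L0_mmul[OF bt gp' g] k(1) K_def by blast
    have sd: "s = mmul u (mmul k v)"
      using ukS by (simp add: v_def mmul_assoc[symmetric] minv_mmul_cancel)
    have "X = mmul u ` (mmul (mmul k v) ` K)" by (simp add: s(2) sd image_image mmul_assoc)
    also have "mmul (mmul k v) ` K = K" unfolding K_def by (rule L0_coset[OF bt gp' g kvK[unfolded K_def]])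
    finally show "X = Y" using u(2) by simp
  qed
  have "card ((\<lambda>s. mmul s ` K) ` L) = card ((\<lambda>X. red 9 ` X) ` ((\<lambda>s. mmul s ` K) ` L))"
    using inj by (simp add: card_image)
  then show ?thesis using e by (simp add: K_def F_def)
qed

lemma L0_Stab: "L0 P t g \<subseteq> Stab t" by (auto simp: L0_def)

lemma ram_L0:
  assumes bt: "base t" and gp': "gpred P'" and gpG: "gpred PG" and g: "g \<in> SL2Z"
  shows "ram (Gam P') (Gam PG) (act g t) =
     card ((\<lambda>m. (\<lambda>k. red 9 (mmul m k)) ` (red 9 ` L0 P' t g)) ` (red 9 ` L0 PG t g))"
proof -
  have "ram (Gam P') (Gam PG) (act g t) = card ((\<lambda>h. mmul h ` (mconj g ` L0 P' t g)) ` (mconj g ` L0 PG t g))"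
    unfolding ram_def pm_stab[OF bt gp' g] pm_stab[OF bt gpG g] unfolding stab_conj[OF bt gp' g] stab_conj[OF bt gpG g] ..
  also have "\<dots> = card ((\<lambda>s. mmul s ` L0 P' t g) ` L0 PG t g)" by (rule card_conj[OF g])
  also have "\<dots> = card ((\<lambda>m. (\<lambda>k. red 9 (mmul m k)) ` (red 9 ` L0 P' t g)) ` (red 9 ` L0 PG t g))"
    by (rule card_mod[OF bt gp' g L0_Stab])
  finally show ?thesis .
qed

lemma L0_red:
  assumes sd: "stabdata t SW"
  shows "red 9 ` L0 P t g = red 9 ` set (filter (\<lambda>w. P (red 9 (mmul (mmul g w) (minv g)))) SW)"
proof (rule set_eqI)
  have SWS: "set SW \<subseteq> Stab t" and cov: "\<forall>s\<in>Stab t. \<exists>w\<in>set SW. red 9 w = red 9 s"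
    using sd by (auto simp: stabdata_def)
  fix m
  show "m \<in> red 9 ` L0 P t g \<longleftrightarrow> m \<in> red 9 ` set (filter (\<lambda>w. P (red 9 (mmul (mmul g w) (minv g)))) SW)"
  proof
    assume "m \<in> red 9 ` L0 P t g"
    then obtain s where s: "s \<in> Stab t" "P (red 9 (mconj g s))" "m = red 9 s" by (auto simp: L0_def)
    obtain w where w: "w \<in> set SW" "red 9 w = red 9 s" using cov s(1) by blast
    have "red 9 (mmul (mmul g w) (minv g)) = red 9 (mconj g s)"
      unfolding mconj_def by (rule red_cong_mid[OF w(2)])
    then have "w \<in> set (filter (\<lambda>w. P (red 9 (mmul (mmul g w) (minv g)))) SW)"
      using w s by simp
    moreover have "m = red 9 w" using w s by simp
    ultimately show "m \<in> red 9 ` set (filter (\<lambda>w. P (red 9 (mmul (mmul g w) (minv g)))) SW)"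
      by blast
  next
    assume "m \<in> red 9 ` set (filter (\<lambda>w. P (red 9 (mmul (mmul g w) (minv g)))) SW)"
    then obtain w where w: "w \<in> set SW" "P (red 9 (mmul (mmul g w) (minv g)))" "m = red 9 w" by auto
    then have "w \<in> L0 P t g" using SWS by (auto simp: L0_def mconj_def)
    then show "m \<in> red 9 ` L0 P t g" using w(3) by blast
  qed
qed

definition rf :: "(mat2 \<Rightarrow> bool) \<Rightarrow> (mat2 \<Rightarrow> bool) \<Rightarrow> mat2 list \<Rightarrow> mat2 \<Rightarrow> nat" where
 "rf P' PG SW g = card ((\<lambda>m. (\<lambda>k. red 9 (mmul m k)) ` (red 9 ` set (filter (\<lambda>w. P' (red 9 (mmul (mmul g w) (minv g)))) SW)))
      ` (red 9 ` set (filter (\<lambda>w. PG (red 9 (mmul (mmul g w) (minv g)))) SW)))"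

lemma ram_rf:
  assumes sd: "stabdata t SW" and gp': "gpred P'" and gpG: "gpred PG" and g: "g \<in> SL2Z"
  shows "ram (Gam P') (Gam PG) (act g t) = rf P' PG SW g"
proof -
  have bt: "base t" using sd by (simp add: stabdata_def)
  show ?thesis unfolding ram_L0[OF bt gp' gpG g] rf_def L0_red[OF sd] ..
qed

lemma L0_inv:
  assumes gp: "gpred P" and ga: "ga \<in> Gam P" and r: "r \<in> SL2Z"
  shows "L0 P t (mmul ga r) = L0 P t r"
proof -
  have gaS: "ga \<in> SL2Z" using Gam_memS[OF ga] .
  have "P (red 9 (mconj (mmul ga r) s)) \<longleftrightarrow> P (red 9 (mconj r s))" if s: "s \<in> Stab t" for s
  proof -
    have sS: "s \<in> SL2Z" using s by (simp add: Stab_def)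
    define X where "X = mconj r s"
    have XS: "X \<in> SL2Z" unfolding X_def by (rule conj_SL[OF r sS])
    have e: "mconj (mmul ga r) s = mconj ga X" by (simp add: X_def mconj_def minv_mmul mmul_assoc)
    have e2: "X = mconj (minv ga) (mconj ga X)"
      using gaS by (simp add: mconj_def mmul_assoc minv_mmul_cancel mmul_minv_left2)
    have "mconj ga X \<in> Gam P \<longleftrightarrow> X \<in> Gam P"
    proof
      assume "mconj ga X \<in> Gam P"
      then have "mmul (mmul (minv ga) (mconj ga X)) ga \<in> Gam P"
        by (intro Gam_mmul[OF gp _ ga] Gam_mmul[OF gp Gam_minv[OF gp ga]])
      then have "mconj (minv ga) (mconj ga X) \<in> Gam P" by (simp add: mconj_def)
      then show "X \<in> Gam P" using e2 by simp
    next
      assume "X \<in> Gam P"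
      then show "mconj ga X \<in> Gam P"
        unfolding mconj_def by (intro Gam_mmul[OF gp _ Gam_minv[OF gp ga]] Gam_mmul[OF gp ga])
    qed
    moreover have "mconj ga X \<in> SL2Z" by (rule conj_SL[OF gaS XS])
    ultimately show ?thesis using XS e by (simp add: Gam_def X_def)
  qed
  then show ?thesis unfolding L0_def by blast
qed

lemma ram_all:
  assumes sd: "stabdata t SW" and gp': "gpred P'" and gpG: "gpred PG" and gpO: "gpred PO"
    and subG: "\<forall>m. P' m \<longrightarrow> PG m" and subO: "\<forall>m. P' m \<longrightarrow> PO m"
    and g0: "g0 \<in> SL2Z" and cov: "cover P' R" and RS: "set R \<subseteq> SL2Z"
    and vals: "\<forall>r\<in>set R. PO (red 9 (mmul r (minv g0))) \<longrightarrow> rf P' PG SW r = e"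
  shows "\<forall>x\<in>orb (Gam PO) (act g0 t). ram (Gam P') (Gam PG) x = e"
proof
  have bt: "base t" using sd by (simp add: stabdata_def)
  fix x assume "x \<in> orb (Gam PO) (act g0 t)"
  then obtain y where y: "y \<in> Gam PO" "x = act (mmul y g0) t"
    using orb_act[OF bt Gam_SL g0] by blast
  define g where "g = mmul y g0"
  have yS: "y \<in> SL2Z" using Gam_memS[OF y(1)] .
  have gS: "g \<in> SL2Z" unfolding g_def by (rule SL2Z_mmul[OF yS g0])
  obtain r where r: "r \<in> set R" "P' (red 9 (mmul g (minv r)))" using cov gS unfolding cover_def by blast
  have rS: "r \<in> SL2Z" using r RS by blast
  define ga where "ga = mmul g (minv r)"
  have gaG: "ga \<in> Gam P'" unfolding ga_def
    by (rule Gam_memI[where P="P'", OF SL2Z_mmul[OF gS SL2Z_minv[OF rS]] r(2)])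
  have geq: "g = mmul ga r" using rS by (simp add: ga_def mmul_assoc minv_mmul_cancel)
  have "mmul r (minv g0) = mmul (minv ga) y"
    using yS by (simp add: ga_def g_def minv_mmul mmul_assoc minv_mmul_cancel g0 mmul_minv_right2)
  moreover have "mmul (minv ga) y \<in> Gam PO"
    by (rule Gam_mmul[OF gpO Gam_sub[OF subO Gam_minv[OF gp' gaG]] y(1)])
  ultimately have "PO (red 9 (mmul r (minv g0)))" by (simp add: Gam_def)
  then have v: "rf P' PG SW r = e" using vals r(1) by blast
  have "ram (Gam P') (Gam PG) x = card ((\<lambda>m. (\<lambda>k. red 9 (mmul m k)) ` (red 9 ` L0 P' t g)) ` (red 9 ` L0 PG t g))"
    using ram_L0[OF bt gp' gpG gS] y(2) g_def by simp
  also have "\<dots> = card ((\<lambda>m. (\<lambda>k. red 9 (mmul m k)) ` (red 9 ` L0 P' t r)) ` (red 9 ` L0 PG t r))"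
    using geq L0_inv[OF gp' gaG rS] L0_inv[OF gpG Gam_sub[OF subG gaG] rS] by simp
  also have "\<dots> = rf P' PG SW r" unfolding rf_def L0_red[OF sd] ..
  finally show "ram (Gam P') (Gam PG) x = e" using v by simp
qed


definition C9L :: "mat2 list" where "C9L = [(1,0,0,1), (0,8,1,0), (8,5,5,1), (1,6,3,1), (8,0,0,8), (5,1,1,4), (6,8,1,6), (4,8,8,5), (2,2,2,7), (5,8,8,4), (1,3,6,1), (0,1,8,0), (1,4,4,8), (8,3,6,8), (2,7,7,7), (8,4,4,1), (3,8,1,3), (7,2,2,2), (8,6,3,8), (1,5,5,8), (3,1,8,3), (7,7,7,2), (4,1,1,5), (6,1,8,6)]"

definition BL :: "mat2 list" where "BL = [(1,0,0,1), (0,8,1,0), (8,5,5,1), (1,6,3,1), (7,3,3,4), (8,0,0,8), (5,1,1,4), (6,8,1,6), (3,2,4,6), (4,8,8,5), (2,2,2,7), (8,2,8,1), (5,8,8,4), (1,3,6,1), (7,0,6,4), (6,5,7,3), (8,8,2,1), (4,6,6,7), (0,1,8,0), (1,4,4,8), (8,3,6,8), (2,6,6,5), (2,7,7,7), (2,1,1,1), (8,4,4,1), (3,8,1,3), (0,2,4,3), (5,3,3,2), (8,1,1,7), (7,2,2,2), (7,8,8,8), (8,6,3,8), (2,8,5,7), (1,8,8,2), (1,5,5,8), (5,5,2,4), (7,6,0,4), (3,5,7,0), (5,2,5,4), (4,3,0,7), (2,5,8,7), (3,1,8,3), (6,7,5,3), (7,7,7,2), (1,7,1,8), (4,1,1,5),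 (2,0,3,5), (3,4,2,6), (1,1,7,8), (6,1,8,6), (8,7,7,4), (5,4,4,7), (6,2,4,0), (5,6,0,2), (2,4,4,4), (5,7,7,1), (1,2,2,5), (2,3,0,5), (4,2,2,8), (5,0,6,2), (4,5,5,2), (7,5,5,5), (0,5,7,6), (4,0,3,7), (0,7,5,6), (7,1,4,2), (4,4,7,5), (6,4,2,0), (4,7,4,5), (7,4,1,2), (3,7,5,0), (0,4,2,3)]"

definition C3L :: "mat2 list" where "C3L = [(0,1,2,0), (0,2,1,0), (1,0,0,1), (1,1,1,2), (1,2,2,2), (2,0,0,2), (2,1,1,1), (2,2,2,1)]"

definition C9W :: "(mat2 \<times> mat2 \<times> mat2) list" where "C9W = [((0,8,1,0),(0,-1,1,0),(1,0,0,1)), ((8,5,5,1),(-1,-4,-4,1),(1,0,0,1)), ((1,6,3,1),(1,-3,3,1),(1,0,0,1)), ((8,0,0,8),(0,-1,1,0),(0,8,1,0)), ((5,1,1,4),(-1,-4,-4,1),(0,8,1,0)), ((6,8,1,6),(1,-3,3,1),(0,8,1,0)), ((4,8,8,5),(0,-1,1,0),(8,5,5,1)), ((2,2,2,7),(1,-3,3,1),(8,5,5,1)), ((5,8,8,4),(-1,-4,-4,1),(1,6,3,1)), ((1,3,6,1),(1,-3,3,1),(1,6,3,1)), ((0,1,8,0),(0,-1,1,0),(8,0,0,8)), ((1,4,4,8),(-1,-4,-4,1),(8,0,0,8)), ((8,3,6,8),(1,-3,3,1),(8,0,0,8)), ((2,7,7,7),(1,-3,3,1),(5,1,1,4)), ((8,4,4,1),(-1,-4,-4,1),(6,8,1,6)),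 ((3,8,1,3),(1,-3,3,1),(6,8,1,6)), ((7,2,2,2),(1,-3,3,1),(4,8,8,5)), ((8,6,3,8),(-1,-4,-4,1),(2,2,2,7)), ((1,5,5,8),(0,-1,1,0),(5,8,8,4)), ((3,1,8,3),(1,-3,3,1),(0,1,8,0)), ((7,7,7,2),(1,-3,3,1),(1,4,4,8)), ((4,1,1,5),(-1,-4,-4,1),(8,3,6,8)), ((6,1,8,6),(-1,-4,-4,1),(2,7,7,7))]"

definition BW :: "(mat2 \<times> mat2 \<times> mat2) list" where "BW = [((0,8,1,0),(0,-1,1,0),(1,0,0,1)), ((8,5,5,1),(-1,-4,-4,1),(1,0,0,1)), ((1,6,3,1),(1,-3,3,1),(1,0,0,1)), ((7,3,3,4),(-2,3,3,4),(1,0,0,1)), ((8,0,0,8),(0,-1,1,0),(0,8,1,0)), ((5,1,1,4),(-1,-4,-4,1),(0,8,1,0)), ((6,8,1,6),(1,-3,3,1),(0,8,1,0)), ((3,2,4,6),(-2,3,3,4),(0,8,1,0)), ((4,8,8,5),(0,-1,1,0),(8,5,5,1)), ((2,2,2,7),(1,-3,3,1),(8,5,5,1)), ((8,2,8,1),(-2,3,3,4),(8,5,5,1)), ((5,8,8,4),(-1,-4,-4,1),(1,6,3,1)), ((1,3,6,1),(1,-3,3,1),(1,6,3,1)), ((7,0,6,4),(-2,3,3,4),(1,6,3,1)), ((6,5,7,3),(0,-1,1,0),(7,3,3,4)), ((8,8,2,1),(-1,-4,-4,1),(7,3,3,4)), ((4,6,6,7),(-2,3,3,4),(7,3,3,4)),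 ((0,1,8,0),(0,-1,1,0),(8,0,0,8)), ((1,4,4,8),(-1,-4,-4,1),(8,0,0,8)), ((8,3,6,8),(1,-3,3,1),(8,0,0,8)), ((2,6,6,5),(-2,3,3,4),(8,0,0,8)), ((2,7,7,7),(1,-3,3,1),(5,1,1,4)), ((2,1,1,1),(-2,3,3,4),(5,1,1,4)), ((8,4,4,1),(-1,-4,-4,1),(6,8,1,6)), ((3,8,1,3),(1,-3,3,1),(6,8,1,6)), ((0,2,4,3),(-2,3,3,4),(6,8,1,6)), ((5,3,3,2),(0,-1,1,0),(3,2,4,6)), ((8,1,1,7),(-1,-4,-4,1),(3,2,4,6)), ((7,2,2,2),(1,-3,3,1),(4,8,8,5)), ((7,8,8,8),(-2,3,3,4),(4,8,8,5)), ((8,6,3,8),(-1,-4,-4,1),(2,2,2,7)), ((2,8,5,7),(-2,3,3,4),(2,2,2,7)), ((1,8,8,2),(0,-1,1,0),(8,2,8,1)), ((1,5,5,8),(0,-1,1,0),(5,8,8,4)), ((5,5,2,4),(-2,3,3,4),(5,8,8,4)), ((7,6,0,4),(-2,3,3,4),(1,3,6,1)), ((3,5,7,0),(0,-1,1,0),(7,0,6,4)), ((5,2,5,4),(-1,-4,-4,1),(7,0,6,4)), ((4,3,0,7),(-2,3,3,4),(7,0,6,4)), ((2,5,8,7),(1,-3,3,1),(8,8,2,1)), ((3,1,8,3),(1,-3,3,1),(0,1,8,0)), ((6,7,5,3),(-2,3,3,4),(0,1,8,0)), ((7,7,7,2),(1,-3,3,1),(1,4,4,8)), ((1,7,1,8),(-2,3,3,4),(1,4,4,8)),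 ((4,1,1,5),(-1,-4,-4,1),(8,3,6,8)), ((2,0,3,5),(-2,3,3,4),(8,3,6,8)), ((3,4,2,6),(0,-1,1,0),(2,6,6,5)), ((1,1,7,8),(-1,-4,-4,1),(2,6,6,5)), ((6,1,8,6),(-1,-4,-4,1),(2,7,7,7)), ((8,7,7,4),(-2,3,3,4),(2,7,7,7)), ((5,4,4,7),(-2,3,3,4),(8,4,4,1)), ((6,2,4,0),(-2,3,3,4),(3,8,1,3)), ((5,6,0,2),(0,-1,1,0),(0,2,4,3)), ((2,4,4,4),(-1,-4,-4,1),(0,2,4,3)), ((5,7,7,1),(1,-3,3,1),(8,1,1,7)), ((1,2,2,5),(-2,3,3,4),(7,2,2,2)), ((2,3,0,5),(-2,3,3,4),(8,6,3,8)), ((4,2,2,8),(0,-1,1,0),(2,8,5,7)), ((5,0,6,2),(-1,-4,-4,1),(2,8,5,7)), ((4,5,5,2),(-2,3,3,4),(1,5,5,8)), ((7,5,5,5),(0,-1,1,0),(5,5,2,4)), ((0,5,7,6),(0,-1,1,0),(7,6,0,4)), ((4,0,3,7),(-2,3,3,4),(7,6,0,4)), ((0,7,5,6),(-2,3,3,4),(3,1,8,3)), ((7,1,4,2),(-2,3,3,4),(7,7,7,2)), ((4,4,7,5),(-2,3,3,4),(4,1,1,5)), ((6,4,2,0),(0,-1,1,0),(2,0,3,5)), ((4,7,4,5),(-1,-4,-4,1),(2,0,3,5)), ((7,4,1,2),(1,-3,3,1),(1,1,7,8)), ((3,7,5,0),(-2,3,3,4),(6,1,8,6)), ((0,4,2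,3),(-1,-4,-4,1),(8,7,7,4))]"

definition S9L :: "mat2 list" where "S9L = [(0,-1,1,0), (-1,-4,-4,1), (1,-3,3,1)]"

definition SBL :: "mat2 list" where "SBL = [(0,-1,1,0), (-1,-4,-4,1), (1,-3,3,1), (-2,3,3,4)]"

fun genchk :: "mat2 list \<Rightarrow> mat2 list \<Rightarrow> (mat2 \<times> mat2 \<times> mat2) list \<Rightarrow> bool" where
  "genchk Ss acc [] = True"
| "genchk Ss acc ((m,s,p)#W) = (s \<in> set Ss \<and> p \<in> set acc \<and> m = red 9 (mmul s p) \<and> genchk Ss (m#acc) W)"

lemma genchk_sub:
  "genchk Ss acc W \<Longrightarrow> set acc \<subseteq> gen 9 S \<Longrightarrow> set Ss \<subseteq> S \<Longrightarrow> set (map fst W) \<subseteq> gen 9 S"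
proof (induction W arbitrary: acc)
  case Nil then show ?case by simp
next
  case (Cons a W)
  obtain m s p where a: "a = (m,s,p)" by (cases a) auto
  have h: "s \<in> set Ss" "p \<in> set acc" "m = red 9 (mmul s p)" "genchk Ss (m#acc) W"
    using Cons.prems(1) a by auto
  have mg: "m \<in> gen 9 S" using h Cons.prems(2,3) gen.gen_mul by blast
  have "set (map fst W) \<subseteq> gen 9 S" using Cons.IH[OF h(4)] mg Cons.prems(2,3) by simp
  then show ?case using mg a by simp
qed

lemma gen_sub_list:
  assumes "red 9 mone \<in> set L" "\<forall>s\<in>S. \<forall>g\<in>set L. red 9 (mmul s g) \<in> set L"
  shows "gen 9 S \<subseteq> set L"
proof
  fix x assume "x \<in> gen 9 S"
  then show "x \<in> set L" by (induction rule: gen.induct) (use assms in auto)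
qed

lemma gen_red: "x \<in> gen n S \<Longrightarrow> red n x = x"
  by (induction rule: gen.induct) simp_all

lemma gen_mult: "g \<in> gen n S \<Longrightarrow> h \<in> gen n S \<Longrightarrow> red n (mmul g h) \<in> gen n S"
proof (induction rule: gen.induct)
  case gen_one
  then show ?case by (simp add: red_mmul_left gen_red)
next
  case (gen_mul s g)
  have "red n (mmul (red n (mmul s g)) h) = red n (mmul s (red n (mmul g h)))"
    by (simp add: red_mmul_left red_mmul_right mmul_assoc)
  then show ?case using gen.gen_mul[OF gen_mul(1) gen_mul(3)[OF gen_mul(4)]] by simp
qed

lemma C9_closed: "list_all (\<lambda>s. list_all (\<lambda>g. red 9 (mmul s g) \<in> set C9L) C9L) S9L" by code_simp
lemma B_closed: "list_all (\<lambda>s. list_all (\<lambda>g. red 9 (mmul s g) \<in> set BL) BL) SBL" by code_simp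
lemma C9_chk: "genchk S9L [(1,0,0,1)] C9W" by code_simp
lemma B_chk: "genchk SBL [(1,0,0,1)] BW" by code_simp
lemma C9_cov: "set C9L \<subseteq> set ((1,0,0,1) # map fst C9W)" by code_simp
lemma B_cov: "set BL \<subseteq> set ((1,0,0,1) # map fst BW)" by code_simp

lemma C9_eq: "C9 = set C9L"
proof
  have S: "set S9L = {(0,-1,1,0), (-1,-4,-4,1), (1,-3,3,1)}" by (simp add: S9L_def)
  show "C9 \<subseteq> set C9L" unfolding C9_def
    by (rule gen_sub_list) (use C9_closed in \<open>simp_all add: S[symmetric] list_all_iff mone_def\<close>, simp add: C9L_def)
  have "red 9 mone \<in> gen 9 {(0,-1,1,0), (-1,-4,-4,1), (1,-3,3,1)}" by (rule gen.gen_one)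
  then have "set ((1,0,0,1) # map fst C9W) \<subseteq> C9"
    using genchk_sub[OF C9_chk, of "{(0,-1,1,0), (-1,-4,-4,1), (1,-3,3,1)}"] S
    by (simp add: C9_def mone_def)
  then show "set C9L \<subseteq> C9" using C9_cov by blast
qed

lemma B_eq: "Bgrp = set BL"
proof
  have S: "set SBL = {(0,-1,1,0), (-1,-4,-4,1), (1,-3,3,1), (-2,3,3,4)}" by (simp add: SBL_def)
  show "Bgrp \<subseteq> set BL" unfolding Bgrp_def
    by (rule gen_sub_list) (use B_closed in \<open>simp_all add: S[symmetric] list_all_iff mone_def\<close>, simp add: BL_def)
  have "red 9 mone \<in> gen 9 {(0,-1,1,0), (-1,-4,-4,1), (1,-3,3,1), (-2,3,3,4)}" by (rule gen.gen_one)
  then have "set ((1,0,0,1) # map fst BW) \<subseteq> Bgrp"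
    using genchk_sub[OF B_chk, of "{(0,-1,1,0), (-1,-4,-4,1), (1,-3,3,1), (-2,3,3,4)}"] S
    by (simp add: Bgrp_def mone_def)
  then show "set BL \<subseteq> Bgrp" using B_cov by blast
qed

lemma C3_chk: "set (map (red 3) C9L) = set C3L" by code_simp
lemma C3_eq: "C3 = set C3L"
  using C3_chk by (simp add: C3_def C9_eq)

definition P9 :: "mat2 \<Rightarrow> bool" where "P9 m \<longleftrightarrow> m \<in> set C9L"
definition PB :: "mat2 \<Rightarrow> bool" where "PB m \<longleftrightarrow> m \<in> set BL"
definition P3 :: "mat2 \<Rightarrow> bool" where "P3 m \<longleftrightarrow> red 3 m \<in> set C3L"
definition PT :: "mat2 \<Rightarrow> bool" where "PT m \<longleftrightarrow> True"

lemma Gamma_C9_eq: "Gamma_C9 = Gam P9" by (simp add: Gamma_C9_def Gam_def P9_def C9_eq)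
lemma Gamma_B_eq: "Gamma_B = Gam PB" by (simp add: Gamma_B_def Gam_def PB_def B_eq)
lemma Gamma_C3_eq: "Gamma_C3 = Gam P3" by (simp add: Gamma_C3_def Gam_def P3_def C3_eq)
lemma SL2Z_eq: "SL2Z = Gam PT" by (simp add: Gam_def PT_def)

lemma C9_inv: "list_all (\<lambda>m. red 9 (minv m) \<in> set C9L) C9L" by code_simp
lemma B_inv: "list_all (\<lambda>m. red 9 (minv m) \<in> set BL) BL" by code_simp
lemma C9_misc: "(1,0,0,1) \<in> set C9L \<and> (8,0,0,8) \<in> set C9L" by code_simp
lemma B_misc: "(1,0,0,1) \<in> set BL \<and> (8,0,0,8) \<in> set BL" by code_simp
lemma C3_closed: "list_all (\<lambda>m. list_all (\<lambda>m'. red 3 (mmul m m') \<in> set C3L) C3L) C3L" by code_simp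
lemma C3_inv: "list_all (\<lambda>m. red 3 (minv m) \<in> set C3L) C3L" by code_simp
lemma C3_misc: "(1,0,0,1) \<in> set C3L \<and> (2,0,0,2) \<in> set C3L" by code_simp
lemma C9_B: "list_all (\<lambda>m. m \<in> set BL) C9L" by code_simp
lemma B_C3: "list_all (\<lambda>m. red 3 m \<in> set C3L) BL" by code_simp

lemma gpred_P9: "gpred P9"
proof -
  have m: "P9 m \<Longrightarrow> P9 m' \<Longrightarrow> P9 (red 9 (mmul m m'))" for m m'
    unfolding P9_def C9_eq[symmetric] C9_def by (rule gen_mult)
  have i: "P9 m \<Longrightarrow> P9 (red 9 (minv m))" for m
    using C9_inv by (simp add: P9_def list_all_iff)
  show ?thesis unfolding gpred_def using m i C9_misc by (simp add: P9_def)
qed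

lemma gpred_PB: "gpred PB"
proof -
  have m: "PB m \<Longrightarrow> PB m' \<Longrightarrow> PB (red 9 (mmul m m'))" for m m'
    unfolding PB_def B_eq[symmetric] Bgrp_def by (rule gen_mult)
  have i: "PB m \<Longrightarrow> PB (red 9 (minv m))" for m
    using B_inv by (simp add: PB_def list_all_iff)
  show ?thesis unfolding gpred_def using m i B_misc by (simp add: PB_def)
qed

lemma gpred_P3: "gpred P3"
proof -
  have m: "P3 m \<Longrightarrow> P3 m' \<Longrightarrow> P3 (red 9 (mmul m m'))" for m m'
  proof -
    assume a: "P3 m" "P3 m'"
    have "red 3 (mmul (red 3 m) (red 3 m')) \<in> set C3L"
      using C3_closed a by (simp add: P3_def list_all_iff)
    then show ?thesis by (simp add: P3_def red_mmul_left red_mmul_right)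
  qed
  have i: "P3 m \<Longrightarrow> P3 (red 9 (minv m))" for m
  proof -
    assume a: "P3 m"
    have "red 3 (minv (red 3 m)) \<in> set C3L" using C3_inv a by (simp add: P3_def list_all_iff)
    then show ?thesis by (simp add: P3_def red_minv)
  qed
  show ?thesis unfolding gpred_def using m i C3_misc by (simp add: P3_def)
qed

lemma gpred_PT: "gpred PT" by (simp add: gpred_def PT_def)

lemma sub_9B: "\<forall>m. P9 m \<longrightarrow> PB m" using C9_B by (simp add: P9_def PB_def list_all_iff)
lemma sub_B3: "\<forall>m. PB m \<longrightarrow> P3 m"
proof (intro allI impI)
  fix m assume "PB m"
  then have "m \<in> set BL" by (simp add: PB_def)
  then have "red 3 m \<in> set C3L" using B_C3 by (simp add: list_all_iff)
  then show "P3 m" by (simp add: P3_def)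
qed
lemma sub_93: "\<forall>m. P9 m \<longrightarrow> P3 m" using sub_9B sub_B3 by blast
lemma sub_T: "\<forall>m. P m \<longrightarrow> PT m" by (simp add: PT_def)


lemma SLlist: "list_all (\<lambda>r. mdet r = 1) xs \<Longrightarrow> set xs \<subseteq> SL2Z"
  by (auto simp: list_all_iff SL2Z_iff)

lemma pti_act: "act (1,k,0,1) (pti 0) = pti k"
  by (simp add: pti_def complex_eq_iff)

lemma cinf_act: "act (1,0,0,1) cinf = cinf" by (simp add: cinf_def)
lemma rho_act: "act (1,0,0,1) rho = rho" by (simp add: rho_def)

lemma i_fix: "a = d \<Longrightarrow> b = -c \<Longrightarrow> (c,d) \<noteq> (0,0) \<Longrightarrow> act (a,b,c,d) (pti 0) = pti 0"
proof -
  assume h: "a = d" "b = -c" "(c,d) \<noteq> (0,0)"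
  let ?i = "Complex 0 1"
  have nz: "of_int c * ?i + of_int d \<noteq> 0" by (rule den_nz) (use h in simp_all)
  have "of_int a * ?i + of_int b = ?i * (of_int c * ?i + of_int d)"
    using h by (simp add: complex_eq_iff)
  then have "(of_int a * ?i + of_int b) / (of_int c * ?i + of_int d) = ?i"
    using nz by (simp add: divide_eq_eq)
  then show ?thesis by (simp add: pti_def)
qed

lemma rho_fix: "a = d - c \<Longrightarrow> b = -c \<Longrightarrow> (c,d) \<noteq> (0,0) \<Longrightarrow> act (a,b,c,d) rho = rho"
proof -
  assume h: "a = d - c" "b = -c" "(c,d) \<noteq> (0,0)"
  define w where "w = Complex (-1/2) (sqrt 3 / 2)"
  have s3: "sqrt 3 * sqrt 3 = (3::real)" by simp
  have ww: "w * w = - w - 1" by (simp add: w_def complex_eq_iff s3) 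
  have nz: "of_int c * w + of_int d \<noteq> 0" by (rule den_nz) (use h in \<open>simp_all add: w_def\<close>)
  have "w * (of_int c * w + of_int d) = of_int c * (w * w) + of_int d * w" by (simp add: algebra_simps)
  also have "\<dots> = of_int a * w + of_int b" unfolding h(1) h(2) by (simp add: ww algebra_simps)
  finally have "(of_int a * w + of_int b) / (of_int c * w + of_int d) = w"
    using nz by (simp add: divide_eq_eq)
  then show ?thesis by (simp add: rho_def w_def)
qed

lemma int_09: "(0::int) \<le> j \<Longrightarrow> j < 9 \<Longrightarrow> j = 0 \<or> j = 1 \<or> j = 2 \<or> j = 3 \<or> j = 4 \<or> j = 5 \<or> j = 6 \<or> j = 7 \<or> j = 8"
  by presburger


definition SWinf :: "mat2 list" where "SWinf = [(1,0,0,1), (1,1,0,1), (1,2,0,1), (1,3,0,1), (1,4,0,1), (1,5,0,1), (1,6,0,1), (1,7,0,1), (1,8,0,1), (-1,0,0,-1), (-1,1,0,-1), (-1,2,0,-1), (-1,3,0,-1), (-1,4,0,-1), (-1,5,0,-1), (-1,6,0,-1), (-1,7,0,-1), (-1,8,0,-1)]"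

definition SWi :: "mat2 list" where "SWi = [(1,0,0,1), (0,-1,1,0), (-1,0,0,-1), (0,1,-1,0)]"

definition SWrho :: "mat2 list" where "SWrho = [(1,0,0,1), (-1,0,0,-1), (-1,-1,1,0), (1,1,-1,0), (0,-1,1,1), (0,1,-1,-1)]"

definition R3 :: "mat2 list" where "R3 = [(1,0,0,1), (1,1,0,1), (1,-1,0,1)]"

lemma R3_SL: "set R3 \<subseteq> SL2Z"
  by (rule SLlist) (simp add: R3_def)

lemma R3_cT: "list_all2 (\<lambda>r r'. P3 (red 9 (mmul (mmul r (1,1,0,1)) (minv r')))) R3 [(1,1,0,1), (1,-1,0,1), (1,0,0,1)] \<and> set [(1,1,0,1), (1,-1,0,1), (1,0,0,1)] \<subseteq> set R3"
  by code_simp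

lemma R3_cTi: "list_all2 (\<lambda>r r'. P3 (red 9 (mmul (mmul r (1,-1,0,1)) (minv r')))) R3 [(1,-1,0,1), (1,0,0,1), (1,1,0,1)] \<and> set [(1,-1,0,1), (1,0,0,1), (1,1,0,1)] \<subseteq> set R3"
  by code_simp

lemma R3_cS: "list_all2 (\<lambda>r r'. P3 (red 9 (mmul (mmul r (0,1,-1,0)) (minv r')))) R3 [(1,0,0,1), (1,1,0,1), (1,-1,0,1)] \<and> set [(1,0,0,1), (1,1,0,1), (1,-1,0,1)] \<subseteq> set R3"
  by code_simp

lemma cover_3: "cover P3 R3"
  by (rule cover_intro[OF gpred_P3 R3_SL _ conjunct1[OF R3_cT] conjunct2[OF R3_cT] conjunct1[OF R3_cTi] conjunct2[OF R3_cTi] conjunct1[OF R3_cS] conjunct2[OF R3_cS]])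
    (rule bexI[of _ "(1,0,0,1)"], simp_all add: R3_def gpred_one[OF gpred_P3])

definition RB :: "mat2 list" where "RB = [(1,0,0,1), (1,1,0,1), (1,-1,0,1), (1,2,0,1), (1,-2,0,1), (1,3,0,1), (1,-3,0,1), (1,4,0,1), (1,-4,0,1)]"

lemma RB_SL: "set RB \<subseteq> SL2Z"
  by (rule SLlist) (simp add: RB_def)

lemma RB_cT: "list_all2 (\<lambda>r r'. PB (red 9 (mmul (mmul r (1,1,0,1)) (minv r')))) RB [(1,1,0,1), (1,2,0,1), (1,0,0,1), (1,3,0,1), (1,-1,0,1), (1,4,0,1), (1,-2,0,1), (1,-4,0,1), (1,-3,0,1)] \<and> set [(1,1,0,1), (1,2,0,1), (1,0,0,1), (1,3,0,1), (1,-1,0,1), (1,4,0,1), (1,-2,0,1), (1,-4,0,1), (1,-3,0,1)] \<subseteq> set RB"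
  by code_simp

lemma RB_cTi: "list_all2 (\<lambda>r r'. PB (red 9 (mmul (mmul r (1,-1,0,1)) (minv r')))) RB [(1,-1,0,1), (1,0,0,1), (1,-2,0,1), (1,1,0,1), (1,-3,0,1), (1,2,0,1), (1,-4,0,1), (1,3,0,1), (1,4,0,1)] \<and> set [(1,-1,0,1), (1,0,0,1), (1,-2,0,1), (1,1,0,1), (1,-3,0,1), (1,2,0,1), (1,-4,0,1), (1,3,0,1), (1,4,0,1)] \<subseteq> set RB"
  by code_simp

lemma RB_cS: "list_all2 (\<lambda>r r'. PB (red 9 (mmul (mmul r (0,1,-1,0)) (minv r')))) RB [(1,0,0,1), (1,1,0,1), (1,2,0,1), (1,-1,0,1), (1,-2,0,1), (1,-3,0,1), (1,3,0,1), (1,4,0,1), (1,-4,0,1)] \<and> set [(1,0,0,1), (1,1,0,1), (1,2,0,1), (1,-1,0,1), (1,-2,0,1), (1,-3,0,1), (1,3,0,1), (1,4,0,1), (1,-4,0,1)] \<subseteq> set RB"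
  by code_simp

lemma cover_B: "cover PB RB"
  by (rule cover_intro[OF gpred_PB RB_SL _ conjunct1[OF RB_cT] conjunct2[OF RB_cT] conjunct1[OF RB_cTi] conjunct2[OF RB_cTi] conjunct1[OF RB_cS] conjunct2[OF RB_cS]])
    (rule bexI[of _ "(1,0,0,1)"], simp_all add: RB_def gpred_one[OF gpred_PB])

definition R9 :: "mat2 list" where "R9 = [(1,0,0,1), (1,1,0,1), (1,-1,0,1), (1,2,0,1), (-1,1,-1,0), (1,-2,0,1), (1,1,-1,0), (1,3,0,1), (-2,1,-1,0), (-1,2,-1,1), (1,-3,0,1), (2,1,-1,0), (1,2,-1,-1), (1,4,0,1), (-2,-1,-1,-1), (-1,3,-1,2), (1,-4,0,1), (2,-1,-1,1), (1,3,-1,-2), (-2,-3,-1,-2), (-1,4,-1,3), (-3,-1,-2,-1), (2,-3,-1,2), (1,4,-1,-3), (-3,1,2,-1), (-1,5,-1,4), (-3,-4,-2,-3)]"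

lemma R9_SL: "set R9 \<subseteq> SL2Z"
  by (rule SLlist) (simp add: R9_def)

lemma R9_cT: "list_all2 (\<lambda>r r'. P9 (red 9 (mmul (mmul r (1,1,0,1)) (minv r')))) R9 [(1,1,0,1), (1,2,0,1), (1,0,0,1), (1,3,0,1), (1,1,-1,0), (1,-1,0,1), (1,2,-1,-1), (1,4,0,1), (-2,-1,-1,-1), (-1,1,-1,0), (1,-2,0,1), (-2,1,-1,0), (1,3,-1,-2), (1,-4,0,1), (-2,-3,-1,-2), (-1,2,-1,1), (1,-3,0,1), (2,1,-1,0), (1,4,-1,-3), (-3,-1,-2,-1), (-1,3,-1,2), (-3,-4,-2,-3), (2,-1,-1,1), (-1,5,-1,4), (2,-3,-1,2), (-1,4,-1,3), (-3,1,2,-1)] \<and> set [(1,1,0,1), (1,2,0,1), (1,0,0,1), (1,3,0,1), (1,1,-1,0), (1,-1,0,1), (1,2,-1,-1), (1,4,0,1), (-2,-1,-1,-1), (-1,1,-1,0), (1,-2,0,1), (-2,1,-1,0), (1,3,-1,-2), (1,-4,0,1), (-2,-3,-1,-2), (-1,2,-1,1), (1,-3,0,1), (2,1,-1,0), (1,4,-1,-3), (-3,-1,-2,-1), (-1,3,-1,2), (-3,-4,-2,-3), (2,-1,-1,1), (-1,5,-1,4), (2,-3,-1,2), (-1,4,-1,3), (-3,1,2,-1)] \<subseteq> set R9"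
  by code_simp

lemma R9_cTi: "list_all2 (\<lambda>r r'. P9 (red 9 (mmul (mmul r (1,-1,0,1)) (minv r')))) R9 [(1,-1,0,1), (1,0,0,1), (1,-2,0,1), (1,1,0,1), (-1,2,-1,1), (1,-3,0,1), (-1,1,-1,0), (1,2,0,1), (2,1,-1,0), (-1,3,-1,2), (1,-4,0,1), (2,-1,-1,1), (1,1,-1,0), (1,3,0,1), (-2,1,-1,0), (-1,4,-1,3), (1,4,0,1), (2,-3,-1,2), (1,2,-1,-1), (-2,-1,-1,-1), (-1,5,-1,4), (-2,-3,-1,-2), (-3,1,2,-1), (1,3,-1,-2), (-3,-4,-2,-3), (1,4,-1,-3), (-3,-1,-2,-1)] \<and> set [(1,-1,0,1), (1,0,0,1), (1,-2,0,1), (1,1,0,1), (-1,2,-1,1), (1,-3,0,1), (-1,1,-1,0), (1,2,0,1), (2,1,-1,0), (-1,3,-1,2), (1,-4,0,1), (2,-1,-1,1), (1,1,-1,0), (1,3,0,1), (-2,1,-1,0), (-1,4,-1,3), (1,4,0,1), (2,-3,-1,2), (1,2,-1,-1), (-2,-1,-1,-1), (-1,5,-1,4), (-2,-3,-1,-2), (-3,1,2,-1), (1,3,-1,-2), (-3,-4,-2,-3), (1,4,-1,-3), (-3,-1,-2,-1)] \<subseteq> set R9"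
  by code_simp

lemma R9_cS: "list_all2 (\<lambda>r r'. P9 (red 9 (mmul (mmul r (0,1,-1,0)) (minv r')))) R9 [(1,0,0,1), (-1,1,-1,0), (1,1,-1,0), (-2,1,-1,0), (1,1,0,1), (2,1,-1,0), (1,-1,0,1), (1,-3,0,1), (1,2,0,1), (-2,-1,-1,-1), (1,3,0,1), (1,-2,0,1), (2,-1,-1,1), (1,4,0,1), (-1,2,-1,1), (-3,-1,-2,-1), (1,-4,0,1), (1,2,-1,-1), (-3,1,2,-1), (-2,-3,-1,-2), (-1,4,-1,3), (-1,3,-1,2), (2,-3,-1,2), (1,4,-1,-3), (1,3,-1,-2), (-3,-4,-2,-3), (-1,5,-1,4)] \<and> set [(1,0,0,1), (-1,1,-1,0), (1,1,-1,0), (-2,1,-1,0), (1,1,0,1), (2,1,-1,0), (1,-1,0,1), (1,-3,0,1), (1,2,0,1), (-2,-1,-1,-1), (1,3,0,1), (1,-2,0,1), (2,-1,-1,1), (1,4,0,1), (-1,2,-1,1), (-3,-1,-2,-1), (1,-4,0,1), (1,2,-1,-1), (-3,1,2,-1), (-2,-3,-1,-2), (-1,4,-1,3), (-1,3,-1,2), (2,-3,-1,2), (1,4,-1,-3), (1,3,-1,-2), (-3,-4,-2,-3), (-1,5,-1,4)] \<subseteq> set R9"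
  by code_simp

lemma cover_9: "cover P9 R9"
  by (rule cover_intro[OF gpred_P9 R9_SL _ conjunct1[OF R9_cT] conjunct2[OF R9_cT] conjunct1[OF R9_cTi] conjunct2[OF R9_cTi] conjunct1[OF R9_cS] conjunct2[OF R9_cS]])
    (rule bexI[of _ "(1,0,0,1)"], simp_all add: R9_def gpred_one[OF gpred_P9])

lemma stabdata_i: "stabdata (pti 0) SWi"
proof -
  have "set SWi \<subseteq> Stab (pti 0)"
    by (auto simp: SWi_def Stab_def SL2Z_def i_fix)
  moreover have "\<forall>s\<in>Stab (pti 0). \<exists>w\<in>set SWi. red 9 w = red 9 s"
  proof
    fix s assume "s \<in> Stab (pti 0)"
    then have "s \<in> set SWi" using Stab_i_char by (simp add: SWi_def)
    then show "\<exists>w\<in>set SWi. red 9 w = red 9 s" by blast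
  qed
  ultimately show ?thesis by (simp add: stabdata_def base_pti)
qed

lemma stabdata_rho: "stabdata rho SWrho"
proof -
  have "set SWrho \<subseteq> Stab rho"
    by (auto simp: SWrho_def Stab_def SL2Z_def rho_fix)
  moreover have "\<forall>s\<in>Stab rho. \<exists>w\<in>set SWrho. red 9 w = red 9 s"
  proof
    fix s assume "s \<in> Stab rho"
    then have "s \<in> set SWrho" using Stab_rho_char by (simp add: SWrho_def)
    then show "\<exists>w\<in>set SWrho. red 9 w = red 9 s" by blast
  qed
  ultimately show ?thesis by (simp add: stabdata_def base_rho)
qed

lemma stabdata_inf: "stabdata cinf SWinf"
proof -
  have "set SWinf \<subseteq> Stab cinf"
    by (auto simp: SWinf_def Stab_def SL2Z_def cinf_def)
  moreover have "\<forall>s\<in>Stab cinf. \<exists>w\<in>set SWinf. red 9 w = red 9 s"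
  proof
    fix s assume "s \<in> Stab cinf"
    then obtain n where n: "s = (1,n,0,1) \<or> s = (-1,n,0,-1)" using Stab_cinf_char by blast
    define j where "j = n mod 9"
    have j: "j = 0 \<or> j = 1 \<or> j = 2 \<or> j = 3 \<or> j = 4 \<or> j = 5 \<or> j = 6 \<or> j = 7 \<or> j = 8"
      by (rule int_09) (simp_all add: j_def)
    have "(1,j,0,1) \<in> set SWinf" "(-1,j,0,-1) \<in> set SWinf" using j by (auto simp: SWinf_def)
    moreover have "red 9 (1,j,0,1) = red 9 (1,n,0,1)" "red 9 (-1,j,0,-1) = red 9 (-1,n,0,-1)"
      using j by (auto simp: j_def)
    ultimately show "\<exists>w\<in>set SWinf. red 9 w = red 9 s" using n by metis
  qed
  ultimately show ?thesis by (simp add: stabdata_def base_cinf)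
qed


lemma fiber_W:
  assumes sd: "stabdata t SW" and gp': "gpred P'" and gpG: "gpred PG"
    and sub: "\<forall>m. P' m \<longrightarrow> PG m" and g0: "g0 \<in> SL2Z"
    and cov: "cover P' R" and RS: "set R \<subseteq> SL2Z" and XS: "list_all (\<lambda>r. mdet r = 1) X"
    and Xin: "list_all (\<lambda>x. PG (red 9 (mmul x (minv g0)))) X"
    and W: "list_all2 (\<lambda>r xs. if PG (red 9 (mmul r (minv g0))) then (fst xs \<in> set X \<and> snd xs \<in> set SW \<and>
              P' (red 9 (mmul (mmul (fst xs) (snd xs)) (minv r)))) else True) R W"
  shows "fiber (Gam P') (Gam PG) (act g0 t) = (\<lambda>x. orb (Gam P') (act x t)) ` set X"
proof (rule fiber_sub[OF sd gp' gpG sub g0 cov RS SLlist[OF XS]])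
  show "\<forall>x\<in>set X. PG (red 9 (mmul x (minv g0)))" using Xin by (simp add: list_all_iff)
  show "\<forall>r\<in>set R. PG (red 9 (mmul r (minv g0))) \<longrightarrow>
          (\<exists>x\<in>set X. \<exists>s\<in>set SW. P' (red 9 (mmul (mmul x s) (minv r))))"
  proof (intro ballI impI)
    fix r assume r: "r \<in> set R" "PG (red 9 (mmul r (minv g0)))"
    obtain xs where "xs \<in> set W" "if PG (red 9 (mmul r (minv g0))) then (fst xs \<in> set X \<and> snd xs \<in> set SW \<and>
              P' (red 9 (mmul (mmul (fst xs) (snd xs)) (minv r)))) else True"
      using list_all2_ex[OF W r(1)] by blast
    then show "\<exists>x\<in>set X. \<exists>s\<in>set SW. P' (red 9 (mmul (mmul x s) (minv r)))" using r(2) by auto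
  qed
qed

lemma card_W:
  assumes sd: "stabdata t SW" and gp': "gpred P'" and XS: "list_all (\<lambda>r. mdet r = 1) X" and dX: "distinct X"
    and pw: "list_all (\<lambda>x. list_all (\<lambda>y. if x = y then True else list_all (\<lambda>w. \<not> P' (red 9 (mmul (mmul y w) (minv x)))) SW) X) X"
  shows "card ((\<lambda>x. orb (Gam P') (act x t)) ` set X) = length X"
proof (rule card_orbs[OF sd gp' SLlist[OF XS] dX], intro ballI impI)
  fix x y w assume x: "x \<in> set X" and y: "y \<in> set X" and ne: "x \<noteq> y" and w: "w \<in> set SW"
  have "list_all (\<lambda>y. if x = y then True else list_all (\<lambda>w. \<not> P' (red 9 (mmul (mmul y w) (minv x)))) SW) X"
    using pw x unfolding list_all_iff by (rule bspec)
  then have "if x = y then True else list_all (\<lambda>w. \<not> P' (red 9 (mmul (mmul y w) (minv x)))) SW"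
    using y unfolding list_all_iff by (rule bspec)
  then have "list_all (\<lambda>w. \<not> P' (red 9 (mmul (mmul y w) (minv x)))) SW"
    by (simp only: if_not_P[OF ne])
  then show "\<not> P' (red 9 (mmul (mmul y w) (minv x)))" unfolding list_all_iff by (rule bspec[OF _ w])
qed

lemma ram_W:
  assumes sd: "stabdata t SW" and gp': "gpred P'" and gpG: "gpred PG" and gpO: "gpred PO"
    and subG: "\<forall>m. P' m \<longrightarrow> PG m" and subO: "\<forall>m. P' m \<longrightarrow> PO m"
    and g0: "g0 \<in> SL2Z" and cov: "cover P' R" and RS: "set R \<subseteq> SL2Z"
    and vals: "list_all (\<lambda>r. if PO (red 9 (mmul r (minv g0))) then rf P' PG SW r = e else True) R"
  shows "\<forall>x\<in>orb (Gam PO) (act g0 t). ram (Gam P') (Gam PG) x = e"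
  by (rule ram_all[OF sd gp' gpG gpO subG subO g0 cov RS]) (use vals in \<open>auto simp: list_all_iff\<close>)

lemma Tk_SL: "(1,k,0,1) \<in> SL2Z" by (simp add: SL2Z_def)
lemma I_SL: "(1,0,0,1) \<in> SL2Z" by (simp add: SL2Z_def)


definition FX1 :: "mat2 list" where "FX1 = [(1,0,0,1)]"
lemma FX1_chk: "list_all (\<lambda>r. mdet r = 1) FX1 \<and> distinct FX1 \<and> list_all (\<lambda>x. PT (red 9 (mmul x (minv (1,0,0,1))))) FX1"
  by code_simp
lemma FW1_chk: "list_all2 (\<lambda>r xs. if PT (red 9 (mmul r (minv (1,0,0,1)))) then (fst xs \<in> set FX1 \<and> snd xs \<in> set SWinf \<and> P3 (red 9 (mmul (mmul (fst xs) (snd xs)) (minv r)))) else True) R3 [((1,0,0,1),(1,0,0,1)), ((1,0,0,1),(1,1,0,1)), ((1,0,0,1),(1,2,0,1))]"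
  by code_simp
lemma FP1_chk: "list_all (\<lambda>x. list_all (\<lambda>y. if x = y then True else list_all (\<lambda>w. \<not> P3 (red 9 (mmul (mmul y w) (minv x)))) SWinf) FX1) FX1"
  by code_simp
lemma F1: "fiber (Gam P3) (Gam PT) (act (1,0,0,1) (cinf)) = (\<lambda>x. orb (Gam P3) (act x (cinf))) ` set FX1"
  by (rule fiber_W[OF stabdata_inf gpred_P3 gpred_PT sub_T I_SL cover_3 R3_SL conjunct1[OF FX1_chk] conjunct2[OF conjunct2[OF FX1_chk]] FW1_chk])
lemma FC1: "card ((\<lambda>x. orb (Gam P3) (act x (cinf))) ` set FX1) = 1"
  using card_W[OF stabdata_inf gpred_P3 conjunct1[OF FX1_chk] conjunct1[OF conjunct2[OF FX1_chk]] FP1_chk] by (simp add: FX1_def)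

definition FX2 :: "mat2 list" where "FX2 = [(1,0,0,1)]"
lemma FX2_chk: "list_all (\<lambda>r. mdet r = 1) FX2 \<and> distinct FX2 \<and> list_all (\<lambda>x. PT (red 9 (mmul x (minv (1,0,0,1))))) FX2"
  by code_simp
lemma FW2_chk: "list_all2 (\<lambda>r xs. if PT (red 9 (mmul r (minv (1,0,0,1)))) then (fst xs \<in> set FX2 \<and> snd xs \<in> set SWinf \<and> PB (red 9 (mmul (mmul (fst xs) (snd xs)) (minv r)))) else True) RB [((1,0,0,1),(1,0,0,1)), ((1,0,0,1),(1,1,0,1)), ((1,0,0,1),(1,8,0,1)), ((1,0,0,1),(1,2,0,1)), ((1,0,0,1),(1,7,0,1)), ((1,0,0,1),(1,3,0,1)), ((1,0,0,1),(1,6,0,1)), ((1,0,0,1),(1,4,0,1)), ((1,0,0,1),(1,5,0,1))]"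
  by code_simp
lemma FP2_chk: "list_all (\<lambda>x. list_all (\<lambda>y. if x = y then True else list_all (\<lambda>w. \<not> PB (red 9 (mmul (mmul y w) (minv x)))) SWinf) FX2) FX2"
  by code_simp
lemma F2: "fiber (Gam PB) (Gam PT) (act (1,0,0,1) (cinf)) = (\<lambda>x. orb (Gam PB) (act x (cinf))) ` set FX2"
  by (rule fiber_W[OF stabdata_inf gpred_PB gpred_PT sub_T I_SL cover_B RB_SL conjunct1[OF FX2_chk] conjunct2[OF conjunct2[OF FX2_chk]] FW2_chk])
lemma FC2: "card ((\<lambda>x. orb (Gam PB) (act x (cinf))) ` set FX2) = 1"
  using card_W[OF stabdata_inf gpred_PB conjunct1[OF FX2_chk] conjunct1[OF conjunct2[OF FX2_chk]] FP2_chk] by (simp add: FX2_def)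

definition FX3 :: "mat2 list" where "FX3 = [(1,0,0,1), (-1,1,-1,0), (-2,1,-1,0)]"
lemma FX3_chk: "list_all (\<lambda>r. mdet r = 1) FX3 \<and> distinct FX3 \<and> list_all (\<lambda>x. PT (red 9 (mmul x (minv (1,0,0,1))))) FX3"
  by code_simp
lemma FW3_chk: "list_all2 (\<lambda>r xs. if PT (red 9 (mmul r (minv (1,0,0,1)))) then (fst xs \<in> set FX3 \<and> snd xs \<in> set SWinf \<and> P9 (red 9 (mmul (mmul (fst xs) (snd xs)) (minv r)))) else True) R9 [((1,0,0,1),(1,0,0,1)), ((1,0,0,1),(1,1,0,1)), ((1,0,0,1),(1,8,0,1)), ((1,0,0,1),(1,2,0,1)), ((-1,1,-1,0),(1,0,0,1)), ((1,0,0,1),(1,7,0,1)), ((-1,1,-1,0),(1,1,0,1)), ((1,0,0,1),(1,3,0,1)), ((-2,1,-1,0),(1,0,0,1)), ((-1,1,-1,0),(1,8,0,1)), ((1,0,0,1),(1,6,0,1)), ((-2,1,-1,0),(1,8,0,1)), ((-1,1,-1,0),(1,2,0,1)), ((1,0,0,1),(1,4,0,1)), ((-2,1,-1,0),(1,1,0,1)), ((-1,1,-1,0),(1,7,0,1)), ((1,0,0,1),(1,5,0,1)), ((-2,1,-1,0),(1,7,0,1)), ((-1,1,-1,0),(1,3,0,1)), ((-2,1,-1,0),(1,2,0,1)), ((-1,1,-1,0),(1,6,0,1)), ((-2,1,-1,0),(1,3,0,1)), ((-2,1,-1,0),(1,6,0,1)), ((-1,1,-1,0),(1,4,0,1)),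 ((-2,1,-1,0),(1,5,0,1)), ((-1,1,-1,0),(1,5,0,1)), ((-2,1,-1,0),(1,4,0,1))]"
  by code_simp
lemma FP3_chk: "list_all (\<lambda>x. list_all (\<lambda>y. if x = y then True else list_all (\<lambda>w. \<not> P9 (red 9 (mmul (mmul y w) (minv x)))) SWinf) FX3) FX3"
  by code_simp
lemma F3: "fiber (Gam P9) (Gam PT) (act (1,0,0,1) (cinf)) = (\<lambda>x. orb (Gam P9) (act x (cinf))) ` set FX3"
  by (rule fiber_W[OF stabdata_inf gpred_P9 gpred_PT sub_T I_SL cover_9 R9_SL conjunct1[OF FX3_chk] conjunct2[OF conjunct2[OF FX3_chk]] FW3_chk])
lemma FC3: "card ((\<lambda>x. orb (Gam P9) (act x (cinf))) ` set FX3) = 3"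
  using card_W[OF stabdata_inf gpred_P9 conjunct1[OF FX3_chk] conjunct1[OF conjunct2[OF FX3_chk]] FP3_chk] by (simp add: FX3_def)

definition FX4 :: "mat2 list" where "FX4 = [(1,0,0,1)]"
lemma FX4_chk: "list_all (\<lambda>r. mdet r = 1) FX4 \<and> distinct FX4 \<and> list_all (\<lambda>x. PT (red 9 (mmul x (minv (1,0,0,1))))) FX4"
  by code_simp
lemma FW4_chk: "list_all2 (\<lambda>r xs. if PT (red 9 (mmul r (minv (1,0,0,1)))) then (fst xs \<in> set FX4 \<and> snd xs \<in> set SWrho \<and> P3 (red 9 (mmul (mmul (fst xs) (snd xs)) (minv r)))) else True) R3 [((1,0,0,1),(1,0,0,1)), ((1,0,0,1),(0,-1,1,1)), ((1,0,0,1),(-1,-1,1,0))]"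
  by code_simp
lemma FP4_chk: "list_all (\<lambda>x. list_all (\<lambda>y. if x = y then True else list_all (\<lambda>w. \<not> P3 (red 9 (mmul (mmul y w) (minv x)))) SWrho) FX4) FX4"
  by code_simp
lemma F4: "fiber (Gam P3) (Gam PT) (act (1,0,0,1) (rho)) = (\<lambda>x. orb (Gam P3) (act x (rho))) ` set FX4"
  by (rule fiber_W[OF stabdata_rho gpred_P3 gpred_PT sub_T I_SL cover_3 R3_SL conjunct1[OF FX4_chk] conjunct2[OF conjunct2[OF FX4_chk]] FW4_chk])
lemma FC4: "card ((\<lambda>x. orb (Gam P3) (act x (rho))) ` set FX4) = 1"
  using card_W[OF stabdata_rho gpred_P3 conjunct1[OF FX4_chk] conjunct1[OF conjunct2[OF FX4_chk]] FP4_chk] by (simp add: FX4_def)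

definition FX5 :: "mat2 list" where "FX5 = [(1,0,0,1), (1,-1,0,1), (1,-3,0,1)]"
lemma FX5_chk: "list_all (\<lambda>r. mdet r = 1) FX5 \<and> distinct FX5 \<and> list_all (\<lambda>x. PT (red 9 (mmul x (minv (1,0,0,1))))) FX5"
  by code_simp
lemma FW5_chk: "list_all2 (\<lambda>r xs. if PT (red 9 (mmul r (minv (1,0,0,1)))) then (fst xs \<in> set FX5 \<and> snd xs \<in> set SWrho \<and> PB (red 9 (mmul (mmul (fst xs) (snd xs)) (minv r)))) else True) RB [((1,0,0,1),(1,0,0,1)), ((1,0,0,1),(0,-1,1,1)), ((1,-1,0,1),(1,0,0,1)), ((1,0,0,1),(-1,-1,1,0)), ((1,-1,0,1),(-1,-1,1,0)), ((1,-1,0,1),(0,-1,1,1)), ((1,-3,0,1),(1,0,0,1)), ((1,-3,0,1),(0,-1,1,1)), ((1,-3,0,1),(-1,-1,1,0))]"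
  by code_simp
lemma FP5_chk: "list_all (\<lambda>x. list_all (\<lambda>y. if x = y then True else list_all (\<lambda>w. \<not> PB (red 9 (mmul (mmul y w) (minv x)))) SWrho) FX5) FX5"
  by code_simp
lemma F5: "fiber (Gam PB) (Gam PT) (act (1,0,0,1) (rho)) = (\<lambda>x. orb (Gam PB) (act x (rho))) ` set FX5"
  by (rule fiber_W[OF stabdata_rho gpred_PB gpred_PT sub_T I_SL cover_B RB_SL conjunct1[OF FX5_chk] conjunct2[OF conjunct2[OF FX5_chk]] FW5_chk])
lemma FC5: "card ((\<lambda>x. orb (Gam PB) (act x (rho))) ` set FX5) = 3"
  using card_W[OF stabdata_rho gpred_PB conjunct1[OF FX5_chk] conjunct1[OF conjunct2[OF FX5_chk]] FP5_chk] by (simp add: FX5_def)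

definition FX6 :: "mat2 list" where "FX6 = [(1,0,0,1), (1,-1,0,1), (1,2,0,1), (1,-2,0,1), (-1,2,-1,1), (1,-3,0,1), (-1,3,-1,2), (2,-1,-1,1), (1,4,-1,-3)]"
lemma FX6_chk: "list_all (\<lambda>r. mdet r = 1) FX6 \<and> distinct FX6 \<and> list_all (\<lambda>x. PT (red 9 (mmul x (minv (1,0,0,1))))) FX6"
  by code_simp
lemma FW6_chk: "list_all2 (\<lambda>r xs. if PT (red 9 (mmul r (minv (1,0,0,1)))) then (fst xs \<in> set FX6 \<and> snd xs \<in> set SWrho \<and> P9 (red 9 (mmul (mmul (fst xs) (snd xs)) (minv r)))) else True) R9 [((1,0,0,1),(1,0,0,1)), ((1,0,0,1),(0,-1,1,1)), ((1,-1,0,1),(1,0,0,1)), ((1,2,0,1),(1,0,0,1)), ((1,2,0,1),(-1,-1,1,0)), ((1,-2,0,1),(1,0,0,1)), ((1,0,0,1),(-1,-1,1,0)), ((1,-2,0,1),(-1,-1,1,0)), ((1,-2,0,1),(0,-1,1,1)), ((-1,2,-1,1),(1,0,0,1)), ((1,-3,0,1),(1,0,0,1)), ((1,-1,0,1),(-1,-1,1,0)), ((1,-1,0,1),(0,-1,1,1)), ((1,-3,0,1),(0,-1,1,1)), ((1,2,0,1),(0,-1,1,1)), ((-1,3,-1,2),(1,0,0,1)), ((1,-3,0,1),(-1,-1,1,0)), ((2,-1,-1,1),(1,0,0,1)), ((2,-1,-1,1),(0,-1,1,1)), ((-1,2,-1,1),(0,-1,1,1)), ((-1,3,-1,2),(-1,-1,1,0)),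 ((-1,2,-1,1),(-1,-1,1,0)), ((2,-1,-1,1),(-1,-1,1,0)), ((1,4,-1,-3),(1,0,0,1)), ((1,4,-1,-3),(-1,-1,1,0)), ((1,4,-1,-3),(0,-1,1,1)), ((-1,3,-1,2),(0,-1,1,1))]"
  by code_simp
lemma FP6_chk: "list_all (\<lambda>x. list_all (\<lambda>y. if x = y then True else list_all (\<lambda>w. \<not> P9 (red 9 (mmul (mmul y w) (minv x)))) SWrho) FX6) FX6"
  by code_simp
lemma F6: "fiber (Gam P9) (Gam PT) (act (1,0,0,1) (rho)) = (\<lambda>x. orb (Gam P9) (act x (rho))) ` set FX6"
  by (rule fiber_W[OF stabdata_rho gpred_P9 gpred_PT sub_T I_SL cover_9 R9_SL conjunct1[OF FX6_chk] conjunct2[OF conjunct2[OF FX6_chk]] FW6_chk])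
lemma FC6: "card ((\<lambda>x. orb (Gam P9) (act x (rho))) ` set FX6) = 9"
  using card_W[OF stabdata_rho gpred_P9 conjunct1[OF FX6_chk] conjunct1[OF conjunct2[OF FX6_chk]] FP6_chk] by (simp add: FX6_def)

definition FX7 :: "mat2 list" where "FX7 = [(1,0,0,1), (1,1,0,1), (1,-1,0,1)]"
lemma FX7_chk: "list_all (\<lambda>r. mdet r = 1) FX7 \<and> distinct FX7 \<and> list_all (\<lambda>x. PT (red 9 (mmul x (minv (1,0,0,1))))) FX7"
  by code_simp
lemma FW7_chk: "list_all2 (\<lambda>r xs. if PT (red 9 (mmul r (minv (1,0,0,1)))) then (fst xs \<in> set FX7 \<and> snd xs \<in> set SWi \<and> P3 (red 9 (mmul (mmul (fst xs) (snd xs)) (minv r)))) else True) R3 [((1,0,0,1),(1,0,0,1)), ((1,1,0,1),(1,0,0,1)), ((1,-1,0,1),(1,0,0,1))]"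
  by code_simp
lemma FP7_chk: "list_all (\<lambda>x. list_all (\<lambda>y. if x = y then True else list_all (\<lambda>w. \<not> P3 (red 9 (mmul (mmul y w) (minv x)))) SWi) FX7) FX7"
  by code_simp
lemma F7: "fiber (Gam P3) (Gam PT) (act (1,0,0,1) (pti 0)) = (\<lambda>x. orb (Gam P3) (act x (pti 0))) ` set FX7"
  by (rule fiber_W[OF stabdata_i gpred_P3 gpred_PT sub_T I_SL cover_3 R3_SL conjunct1[OF FX7_chk] conjunct2[OF conjunct2[OF FX7_chk]] FW7_chk])
lemma FC7: "card ((\<lambda>x. orb (Gam P3) (act x (pti 0))) ` set FX7) = 3"
  using card_W[OF stabdata_i gpred_P3 conjunct1[OF FX7_chk] conjunct1[OF conjunct2[OF FX7_chk]] FP7_chk] by (simp add: FX7_def)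

definition FX8 :: "mat2 list" where "FX8 = [(1,0,0,1), (1,3,0,1)]"
lemma FX8_chk: "list_all (\<lambda>r. mdet r = 1) FX8 \<and> distinct FX8 \<and> list_all (\<lambda>x. P3 (red 9 (mmul x (minv (1,0,0,1))))) FX8"
  by code_simp
lemma FW8_chk: "list_all2 (\<lambda>r xs. if P3 (red 9 (mmul r (minv (1,0,0,1)))) then (fst xs \<in> set FX8 \<and> snd xs \<in> set SWi \<and> PB (red 9 (mmul (mmul (fst xs) (snd xs)) (minv r)))) else True) RB [((1,0,0,1),(1,0,0,1)), ((1,0,0,1),(1,0,0,1)), ((1,0,0,1),(1,0,0,1)), ((1,0,0,1),(1,0,0,1)), ((1,0,0,1),(1,0,0,1)), ((1,3,0,1),(1,0,0,1)), ((1,3,0,1),(0,-1,1,0)), ((1,0,0,1),(1,0,0,1)), ((1,0,0,1),(1,0,0,1))]"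
  by code_simp
lemma FP8_chk: "list_all (\<lambda>x. list_all (\<lambda>y. if x = y then True else list_all (\<lambda>w. \<not> PB (red 9 (mmul (mmul y w) (minv x)))) SWi) FX8) FX8"
  by code_simp
lemma F8: "fiber (Gam PB) (Gam P3) (act (1,0,0,1) (pti 0)) = (\<lambda>x. orb (Gam PB) (act x (pti 0))) ` set FX8"
  by (rule fiber_W[OF stabdata_i gpred_PB gpred_P3 sub_B3 I_SL cover_B RB_SL conjunct1[OF FX8_chk] conjunct2[OF conjunct2[OF FX8_chk]] FW8_chk])
lemma FC8: "card ((\<lambda>x. orb (Gam PB) (act x (pti 0))) ` set FX8) = 2"
  using card_W[OF stabdata_i gpred_PB conjunct1[OF FX8_chk] conjunct1[OF conjunct2[OF FX8_chk]] FP8_chk] by (simp add: FX8_def)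

definition FX9 :: "mat2 list" where "FX9 = [(1,-1,0,1), (1,-4,0,1)]"
lemma FX9_chk: "list_all (\<lambda>r. mdet r = 1) FX9 \<and> distinct FX9 \<and> list_all (\<lambda>x. P3 (red 9 (mmul x (minv (1,-1,0,1))))) FX9"
  by code_simp
lemma FW9_chk: "list_all2 (\<lambda>r xs. if P3 (red 9 (mmul r (minv (1,-1,0,1)))) then (fst xs \<in> set FX9 \<and> snd xs \<in> set SWi \<and> PB (red 9 (mmul (mmul (fst xs) (snd xs)) (minv r)))) else True) RB [((1,0,0,1),(1,0,0,1)), ((1,0,0,1),(1,0,0,1)), ((1,-1,0,1),(1,0,0,1)), ((1,-1,0,1),(0,-1,1,0)), ((1,0,0,1),(1,0,0,1)), ((1,0,0,1),(1,0,0,1)), ((1,0,0,1),(1,0,0,1)), ((1,0,0,1),(1,0,0,1)), ((1,-4,0,1),(1,0,0,1))]"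
  by code_simp
lemma FP9_chk: "list_all (\<lambda>x. list_all (\<lambda>y. if x = y then True else list_all (\<lambda>w. \<not> PB (red 9 (mmul (mmul y w) (minv x)))) SWi) FX9) FX9"
  by code_simp
lemma F9: "fiber (Gam PB) (Gam P3) (act (1,-1,0,1) (pti 0)) = (\<lambda>x. orb (Gam PB) (act x (pti 0))) ` set FX9"
  by (rule fiber_W[OF stabdata_i gpred_PB gpred_P3 sub_B3 Tk_SL cover_B RB_SL conjunct1[OF FX9_chk] conjunct2[OF conjunct2[OF FX9_chk]] FW9_chk])
lemma FC9: "card ((\<lambda>x. orb (Gam PB) (act x (pti 0))) ` set FX9) = 2"
  using card_W[OF stabdata_i gpred_PB conjunct1[OF FX9_chk] conjunct1[OF conjunct2[OF FX9_chk]] FP9_chk] by (simp add: FX9_def)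

definition FX10 :: "mat2 list" where "FX10 = [(1,1,0,1), (1,4,0,1), (1,-2,0,1)]"
lemma FX10_chk: "list_all (\<lambda>r. mdet r = 1) FX10 \<and> distinct FX10 \<and> list_all (\<lambda>x. P3 (red 9 (mmul x (minv (1,1,0,1))))) FX10"
  by code_simp
lemma FW10_chk: "list_all2 (\<lambda>r xs. if P3 (red 9 (mmul r (minv (1,1,0,1)))) then (fst xs \<in> set FX10 \<and> snd xs \<in> set SWi \<and> PB (red 9 (mmul (mmul (fst xs) (snd xs)) (minv r)))) else True) RB [((1,0,0,1),(1,0,0,1)), ((1,1,0,1),(1,0,0,1)), ((1,0,0,1),(1,0,0,1)), ((1,0,0,1),(1,0,0,1)), ((1,-2,0,1),(1,0,0,1)), ((1,0,0,1),(1,0,0,1)), ((1,0,0,1),(1,0,0,1)), ((1,4,0,1),(1,0,0,1)), ((1,0,0,1),(1,0,0,1))]"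
  by code_simp
lemma FP10_chk: "list_all (\<lambda>x. list_all (\<lambda>y. if x = y then True else list_all (\<lambda>w. \<not> PB (red 9 (mmul (mmul y w) (minv x)))) SWi) FX10) FX10"
  by code_simp
lemma F10: "fiber (Gam PB) (Gam P3) (act (1,1,0,1) (pti 0)) = (\<lambda>x. orb (Gam PB) (act x (pti 0))) ` set FX10"
  by (rule fiber_W[OF stabdata_i gpred_PB gpred_P3 sub_B3 Tk_SL cover_B RB_SL conjunct1[OF FX10_chk] conjunct2[OF conjunct2[OF FX10_chk]] FW10_chk])
lemma FC10: "card ((\<lambda>x. orb (Gam PB) (act x (pti 0))) ` set FX10) = 3"
  using card_W[OF stabdata_i gpred_PB conjunct1[OF FX10_chk] conjunct1[OF conjunct2[OF FX10_chk]] FP10_chk] by (simp add: FX10_def)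

definition FX11 :: "mat2 list" where "FX11 = [(1,3,0,1), (1,2,-1,-1), (-3,-4,-2,-3)]"
lemma FX11_chk: "list_all (\<lambda>r. mdet r = 1) FX11 \<and> distinct FX11 \<and> list_all (\<lambda>x. PB (red 9 (mmul x (minv (1,3,0,1))))) FX11"
  by code_simp
lemma FW11_chk: "list_all2 (\<lambda>r xs. if PB (red 9 (mmul r (minv (1,3,0,1)))) then (fst xs \<in> set FX11 \<and> snd xs \<in> set SWi \<and> P9 (red 9 (mmul (mmul (fst xs) (snd xs)) (minv r)))) else True) R9 [((1,0,0,1),(1,0,0,1)), ((1,0,0,1),(1,0,0,1)), ((1,0,0,1),(1,0,0,1)), ((1,0,0,1),(1,0,0,1)), ((1,0,0,1),(1,0,0,1)), ((1,0,0,1),(1,0,0,1)), ((1,0,0,1),(1,0,0,1)), ((1,3,0,1),(1,0,0,1)), ((1,0,0,1),(1,0,0,1)), ((1,0,0,1),(1,0,0,1)), ((1,0,0,1),(1,0,0,1)), ((1,0,0,1),(1,0,0,1)), ((1,2,-1,-1),(1,0,0,1)), ((1,0,0,1),(1,0,0,1)), ((1,0,0,1),(1,0,0,1)), ((1,0,0,1),(1,0,0,1)), ((1,0,0,1),(1,0,0,1)), ((1,0,0,1),(1,0,0,1)), ((1,0,0,1),(1,0,0,1)), ((1,0,0,1),(1,0,0,1)), ((1,0,0,1),(1,0,0,1)), ((1,0,0,1),(1,0,0,1)), ((1,0,0,1),(1,0,0,1)), ((1,0,0,1),(1,0,0,1)), ((1,0,0,1),(1,0,0,1)), ((1,0,0,1),(1,0,0,1)),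 ((-3,-4,-2,-3),(1,0,0,1))]"
  by code_simp
lemma FP11_chk: "list_all (\<lambda>x. list_all (\<lambda>y. if x = y then True else list_all (\<lambda>w. \<not> P9 (red 9 (mmul (mmul y w) (minv x)))) SWi) FX11) FX11"
  by code_simp
lemma F11: "fiber (Gam P9) (Gam PB) (act (1,3,0,1) (pti 0)) = (\<lambda>x. orb (Gam P9) (act x (pti 0))) ` set FX11"
  by (rule fiber_W[OF stabdata_i gpred_P9 gpred_PB sub_9B Tk_SL cover_9 R9_SL conjunct1[OF FX11_chk] conjunct2[OF conjunct2[OF FX11_chk]] FW11_chk])
lemma FC11: "card ((\<lambda>x. orb (Gam P9) (act x (pti 0))) ` set FX11) = 3"
  using card_W[OF stabdata_i gpred_P9 conjunct1[OF FX11_chk] conjunct1[OF conjunct2[OF FX11_chk]] FP11_chk] by (simp add: FX11_def)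

definition FX12 :: "mat2 list" where "FX12 = [(1,-1,0,1), (-2,1,-1,0), (-1,3,-1,2)]"
lemma FX12_chk: "list_all (\<lambda>r. mdet r = 1) FX12 \<and> distinct FX12 \<and> list_all (\<lambda>x. PB (red 9 (mmul x (minv (1,-1,0,1))))) FX12"
  by code_simp
lemma FW12_chk: "list_all2 (\<lambda>r xs. if PB (red 9 (mmul r (minv (1,-1,0,1)))) then (fst xs \<in> set FX12 \<and> snd xs \<in> set SWi \<and> P9 (red 9 (mmul (mmul (fst xs) (snd xs)) (minv r)))) else True) R9 [((1,0,0,1),(1,0,0,1)), ((1,0,0,1),(1,0,0,1)), ((1,-1,0,1),(1,0,0,1)), ((1,0,0,1),(1,0,0,1)), ((1,0,0,1),(1,0,0,1)), ((1,0,0,1),(1,0,0,1)), ((1,0,0,1),(1,0,0,1)), ((1,0,0,1),(1,0,0,1)), ((-2,1,-1,0),(1,0,0,1)), ((1,0,0,1),(1,0,0,1)), ((1,0,0,1),(1,0,0,1)), ((1,0,0,1),(1,0,0,1)), ((1,0,0,1),(1,0,0,1)), ((1,0,0,1),(1,0,0,1)), ((1,0,0,1),(1,0,0,1)), ((-1,3,-1,2),(1,0,0,1)), ((1,0,0,1),(1,0,0,1)), ((1,0,0,1),(1,0,0,1)), ((1,0,0,1),(1,0,0,1)), ((1,0,0,1),(1,0,0,1)), ((1,0,0,1),(1,0,0,1)), ((1,0,0,1),(1,0,0,1)), ((1,0,0,1),(1,0,0,1)), ((1,0,0,1),(1,0,0,1)), ((1,0,0,1),(1,0,0,1)), ((1,0,0,1),(1,0,0,1)),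 ((1,0,0,1),(1,0,0,1))]"
  by code_simp
lemma FP12_chk: "list_all (\<lambda>x. list_all (\<lambda>y. if x = y then True else list_all (\<lambda>w. \<not> P9 (red 9 (mmul (mmul y w) (minv x)))) SWi) FX12) FX12"
  by code_simp
lemma F12: "fiber (Gam P9) (Gam PB) (act (1,-1,0,1) (pti 0)) = (\<lambda>x. orb (Gam P9) (act x (pti 0))) ` set FX12"
  by (rule fiber_W[OF stabdata_i gpred_P9 gpred_PB sub_9B Tk_SL cover_9 R9_SL conjunct1[OF FX12_chk] conjunct2[OF conjunct2[OF FX12_chk]] FW12_chk])
lemma FC12: "card ((\<lambda>x. orb (Gam P9) (act x (pti 0))) ` set FX12) = 3"
  using card_W[OF stabdata_i gpred_P9 conjunct1[OF FX12_chk] conjunct1[OF conjunct2[OF FX12_chk]] FP12_chk] by (simp add: FX12_def)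

definition FX13 :: "mat2 list" where "FX13 = [(1,-4,0,1), (2,-3,-1,2), (1,4,-1,-3)]"
lemma FX13_chk: "list_all (\<lambda>r. mdet r = 1) FX13 \<and> distinct FX13 \<and> list_all (\<lambda>x. PB (red 9 (mmul x (minv (1,-4,0,1))))) FX13"
  by code_simp
lemma FW13_chk: "list_all2 (\<lambda>r xs. if PB (red 9 (mmul r (minv (1,-4,0,1)))) then (fst xs \<in> set FX13 \<and> snd xs \<in> set SWi \<and> P9 (red 9 (mmul (mmul (fst xs) (snd xs)) (minv r)))) else True) R9 [((1,0,0,1),(1,0,0,1)), ((1,0,0,1),(1,0,0,1)), ((1,0,0,1),(1,0,0,1)), ((1,0,0,1),(1,0,0,1)), ((1,0,0,1),(1,0,0,1)), ((1,0,0,1),(1,0,0,1)), ((1,0,0,1),(1,0,0,1)), ((1,0,0,1),(1,0,0,1)), ((1,0,0,1),(1,0,0,1)), ((1,0,0,1),(1,0,0,1)), ((1,0,0,1),(1,0,0,1)), ((1,0,0,1),(1,0,0,1)), ((1,0,0,1),(1,0,0,1)), ((1,0,0,1),(1,0,0,1)), ((1,0,0,1),(1,0,0,1)), ((1,0,0,1),(1,0,0,1)), ((1,-4,0,1),(1,0,0,1)), ((1,0,0,1),(1,0,0,1)), ((1,0,0,1),(1,0,0,1)), ((1,0,0,1),(1,0,0,1)), ((1,0,0,1),(1,0,0,1)), ((1,0,0,1),(1,0,0,1)), ((2,-3,-1,2),(1,0,0,1)), ((1,4,-1,-3),(1,0,0,1)), ((1,0,0,1),(1,0,0,1)), ((1,0,0,1),(1,0,0,1)),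 ((1,0,0,1),(1,0,0,1))]"
  by code_simp
lemma FP13_chk: "list_all (\<lambda>x. list_all (\<lambda>y. if x = y then True else list_all (\<lambda>w. \<not> P9 (red 9 (mmul (mmul y w) (minv x)))) SWi) FX13) FX13"
  by code_simp
lemma F13: "fiber (Gam P9) (Gam PB) (act (1,-4,0,1) (pti 0)) = (\<lambda>x. orb (Gam P9) (act x (pti 0))) ` set FX13"
  by (rule fiber_W[OF stabdata_i gpred_P9 gpred_PB sub_9B Tk_SL cover_9 R9_SL conjunct1[OF FX13_chk] conjunct2[OF conjunct2[OF FX13_chk]] FW13_chk])
lemma FC13: "card ((\<lambda>x. orb (Gam P9) (act x (pti 0))) ` set FX13) = 3"
  using card_W[OF stabdata_i gpred_P9 conjunct1[OF FX13_chk] conjunct1[OF conjunct2[OF FX13_chk]] FP13_chk] by (simp add: FX13_def)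

definition FX14 :: "mat2 list" where "FX14 = [(1,0,0,1), (-1,2,-1,1)]"
lemma FX14_chk: "list_all (\<lambda>r. mdet r = 1) FX14 \<and> distinct FX14 \<and> list_all (\<lambda>x. PB (red 9 (mmul x (minv (1,0,0,1))))) FX14"
  by code_simp
lemma FW14_chk: "list_all2 (\<lambda>r xs. if PB (red 9 (mmul r (minv (1,0,0,1)))) then (fst xs \<in> set FX14 \<and> snd xs \<in> set SWi \<and> P9 (red 9 (mmul (mmul (fst xs) (snd xs)) (minv r)))) else True) R9 [((1,0,0,1),(1,0,0,1)), ((1,0,0,1),(1,0,0,1)), ((1,0,0,1),(1,0,0,1)), ((1,0,0,1),(1,0,0,1)), ((1,0,0,1),(1,0,0,1)), ((1,0,0,1),(1,0,0,1)), ((1,0,0,1),(1,0,0,1)), ((1,0,0,1),(1,0,0,1)), ((1,0,0,1),(1,0,0,1)), ((-1,2,-1,1),(1,0,0,1)), ((1,0,0,1),(1,0,0,1)), ((1,0,0,1),(1,0,0,1)), ((1,0,0,1),(1,0,0,1)), ((1,0,0,1),(1,0,0,1)), ((-1,2,-1,1),(0,-1,1,0)), ((1,0,0,1),(1,0,0,1)), ((1,0,0,1),(1,0,0,1)), ((1,0,0,1),(1,0,0,1)), ((1,0,0,1),(1,0,0,1)), ((1,0,0,1),(1,0,0,1)), ((1,0,0,1),(1,0,0,1)), ((1,0,0,1),(1,0,0,1)), ((1,0,0,1),(1,0,0,1)), ((1,0,0,1),(1,0,0,1)), ((1,0,0,1),(1,0,0,1)), ((1,0,0,1),(1,0,0,1)),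 ((1,0,0,1),(1,0,0,1))]"
  by code_simp
lemma FP14_chk: "list_all (\<lambda>x. list_all (\<lambda>y. if x = y then True else list_all (\<lambda>w. \<not> P9 (red 9 (mmul (mmul y w) (minv x)))) SWi) FX14) FX14"
  by code_simp
lemma F14: "fiber (Gam P9) (Gam PB) (act (1,0,0,1) (pti 0)) = (\<lambda>x. orb (Gam P9) (act x (pti 0))) ` set FX14"
  by (rule fiber_W[OF stabdata_i gpred_P9 gpred_PB sub_9B I_SL cover_9 R9_SL conjunct1[OF FX14_chk] conjunct2[OF conjunct2[OF FX14_chk]] FW14_chk])
lemma FC14: "card ((\<lambda>x. orb (Gam P9) (act x (pti 0))) ` set FX14) = 2"
  using card_W[OF stabdata_i gpred_P9 conjunct1[OF FX14_chk] conjunct1[OF conjunct2[OF FX14_chk]] FP14_chk] by (simp add: FX14_def)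

lemma RS15: "ram (Gam P9) (Gam PB) (act (1,0,0,1) (pti 0)) = 1"
proof -
  have "rf P9 PB SWi (1,0,0,1) = 1" by code_simp
  then show ?thesis using ram_rf[OF stabdata_i gpred_P9 gpred_PB, of "(1,0,0,1)"] by (simp add: SL2Z_def)
qed

lemma RS16: "ram (Gam P9) (Gam PB) (act (-1,2,-1,1) (pti 0)) = 2"
proof -
  have "rf P9 PB SWi (-1,2,-1,1) = 2" by code_simp
  then show ?thesis using ram_rf[OF stabdata_i gpred_P9 gpred_PB, of "(-1,2,-1,1)"] by (simp add: SL2Z_def)
qed

definition FX17 :: "mat2 list" where "FX17 = [(-2,-3,-1,-2), (1,1,0,1)]"
lemma FX17_chk: "list_all (\<lambda>r. mdet r = 1) FX17 \<and> distinct FX17 \<and> list_all (\<lambda>x. PB (red 9 (mmul x (minv (1,1,0,1))))) FX17"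
  by code_simp
lemma FW17_chk: "list_all2 (\<lambda>r xs. if PB (red 9 (mmul r (minv (1,1,0,1)))) then (fst xs \<in> set FX17 \<and> snd xs \<in> set SWi \<and> P9 (red 9 (mmul (mmul (fst xs) (snd xs)) (minv r)))) else True) R9 [((1,0,0,1),(1,0,0,1)), ((1,1,0,1),(1,0,0,1)), ((1,0,0,1),(1,0,0,1)), ((1,0,0,1),(1,0,0,1)), ((1,1,0,1),(0,-1,1,0)), ((1,0,0,1),(1,0,0,1)), ((1,0,0,1),(1,0,0,1)), ((1,0,0,1),(1,0,0,1)), ((1,0,0,1),(1,0,0,1)), ((1,0,0,1),(1,0,0,1)), ((1,0,0,1),(1,0,0,1)), ((1,0,0,1),(1,0,0,1)), ((1,0,0,1),(1,0,0,1)), ((1,0,0,1),(1,0,0,1)), ((1,0,0,1),(1,0,0,1)), ((1,0,0,1),(1,0,0,1)), ((1,0,0,1),(1,0,0,1)), ((1,0,0,1),(1,0,0,1)), ((1,0,0,1),(1,0,0,1)), ((-2,-3,-1,-2),(1,0,0,1)), ((1,0,0,1),(1,0,0,1)), ((1,0,0,1),(1,0,0,1)), ((1,0,0,1),(1,0,0,1)), ((1,0,0,1),(1,0,0,1)), ((1,0,0,1),(1,0,0,1)), ((1,0,0,1),(1,0,0,1)), ((1,0,0,1),(1,0,0,1))]"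
  by code_simp
lemma FP17_chk: "list_all (\<lambda>x. list_all (\<lambda>y. if x = y then True else list_all (\<lambda>w. \<not> P9 (red 9 (mmul (mmul y w) (minv x)))) SWi) FX17) FX17"
  by code_simp
lemma F17: "fiber (Gam P9) (Gam PB) (act (1,1,0,1) (pti 0)) = (\<lambda>x. orb (Gam P9) (act x (pti 0))) ` set FX17"
  by (rule fiber_W[OF stabdata_i gpred_P9 gpred_PB sub_9B Tk_SL cover_9 R9_SL conjunct1[OF FX17_chk] conjunct2[OF conjunct2[OF FX17_chk]] FW17_chk])
lemma FC17: "card ((\<lambda>x. orb (Gam P9) (act x (pti 0))) ` set FX17) = 2"
  using card_W[OF stabdata_i gpred_P9 conjunct1[OF FX17_chk] conjunct1[OF conjunct2[OF FX17_chk]] FP17_chk] by (simp add: FX17_def)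

lemma RS18: "ram (Gam P9) (Gam PB) (act (-2,-3,-1,-2) (pti 0)) = 1"
proof -
  have "rf P9 PB SWi (-2,-3,-1,-2) = 1" by code_simp
  then show ?thesis using ram_rf[OF stabdata_i gpred_P9 gpred_PB, of "(-2,-3,-1,-2)"] by (simp add: SL2Z_def)
qed

lemma RS19: "ram (Gam P9) (Gam PB) (act (1,1,0,1) (pti 0)) = 2"
proof -
  have "rf P9 PB SWi (1,1,0,1) = 2" by code_simp
  then show ?thesis using ram_rf[OF stabdata_i gpred_P9 gpred_PB, of "(1,1,0,1)"] by (simp add: SL2Z_def)
qed

definition FX20 :: "mat2 list" where "FX20 = [(1,4,0,1), (1,3,-1,-2)]"
lemma FX20_chk: "list_all (\<lambda>r. mdet r = 1) FX20 \<and> distinct FX20 \<and> list_all (\<lambda>x. PB (red 9 (mmul x (minv (1,4,0,1))))) FX20"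
  by code_simp
lemma FW20_chk: "list_all2 (\<lambda>r xs. if PB (red 9 (mmul r (minv (1,4,0,1)))) then (fst xs \<in> set FX20 \<and> snd xs \<in> set SWi \<and> P9 (red 9 (mmul (mmul (fst xs) (snd xs)) (minv r)))) else True) R9 [((1,0,0,1),(1,0,0,1)), ((1,0,0,1),(1,0,0,1)), ((1,0,0,1),(1,0,0,1)), ((1,0,0,1),(1,0,0,1)), ((1,0,0,1),(1,0,0,1)), ((1,0,0,1),(1,0,0,1)), ((1,0,0,1),(1,0,0,1)), ((1,0,0,1),(1,0,0,1)), ((1,0,0,1),(1,0,0,1)), ((1,0,0,1),(1,0,0,1)), ((1,0,0,1),(1,0,0,1)), ((1,0,0,1),(1,0,0,1)), ((1,0,0,1),(1,0,0,1)), ((1,4,0,1),(1,0,0,1)), ((1,0,0,1),(1,0,0,1)), ((1,0,0,1),(1,0,0,1)), ((1,0,0,1),(1,0,0,1)), ((1,0,0,1),(1,0,0,1)), ((1,3,-1,-2),(1,0,0,1)), ((1,0,0,1),(1,0,0,1)), ((1,0,0,1),(1,0,0,1)), ((1,0,0,1),(1,0,0,1)), ((1,0,0,1),(1,0,0,1)), ((1,0,0,1),(1,0,0,1)), ((1,3,-1,-2),(0,-1,1,0)), ((1,0,0,1),(1,0,0,1)), ((1,0,0,1),(1,0,0,1))]"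
  by code_simp
lemma FP20_chk: "list_all (\<lambda>x. list_all (\<lambda>y. if x = y then True else list_all (\<lambda>w. \<not> P9 (red 9 (mmul (mmul y w) (minv x)))) SWi) FX20) FX20"
  by code_simp
lemma F20: "fiber (Gam P9) (Gam PB) (act (1,4,0,1) (pti 0)) = (\<lambda>x. orb (Gam P9) (act x (pti 0))) ` set FX20"
  by (rule fiber_W[OF stabdata_i gpred_P9 gpred_PB sub_9B Tk_SL cover_9 R9_SL conjunct1[OF FX20_chk] conjunct2[OF conjunct2[OF FX20_chk]] FW20_chk])
lemma FC20: "card ((\<lambda>x. orb (Gam P9) (act x (pti 0))) ` set FX20) = 2"
  using card_W[OF stabdata_i gpred_P9 conjunct1[OF FX20_chk] conjunct1[OF conjunct2[OF FX20_chk]] FP20_chk] by (simp add: FX20_def)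

lemma RS21: "ram (Gam P9) (Gam PB) (act (1,4,0,1) (pti 0)) = 1"
proof -
  have "rf P9 PB SWi (1,4,0,1) = 1" by code_simp
  then show ?thesis using ram_rf[OF stabdata_i gpred_P9 gpred_PB, of "(1,4,0,1)"] by (simp add: SL2Z_def)
qed

lemma RS22: "ram (Gam P9) (Gam PB) (act (1,3,-1,-2) (pti 0)) = 2"
proof -
  have "rf P9 PB SWi (1,3,-1,-2) = 2" by code_simp
  then show ?thesis using ram_rf[OF stabdata_i gpred_P9 gpred_PB, of "(1,3,-1,-2)"] by (simp add: SL2Z_def)
qed

definition FX23 :: "mat2 list" where "FX23 = [(-1,4,-1,3), (1,-2,0,1)]"
lemma FX23_chk: "list_all (\<lambda>r. mdet r = 1) FX23 \<and> distinct FX23 \<and> list_all (\<lambda>x. PB (red 9 (mmul x (minv (1,-2,0,1))))) FX23"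
  by code_simp
lemma FW23_chk: "list_all2 (\<lambda>r xs. if PB (red 9 (mmul r (minv (1,-2,0,1)))) then (fst xs \<in> set FX23 \<and> snd xs \<in> set SWi \<and> P9 (red 9 (mmul (mmul (fst xs) (snd xs)) (minv r)))) else True) R9 [((1,0,0,1),(1,0,0,1)), ((1,0,0,1),(1,0,0,1)), ((1,0,0,1),(1,0,0,1)), ((1,0,0,1),(1,0,0,1)), ((1,0,0,1),(1,0,0,1)), ((1,-2,0,1),(1,0,0,1)), ((1,0,0,1),(1,0,0,1)), ((1,0,0,1),(1,0,0,1)), ((1,0,0,1),(1,0,0,1)), ((1,0,0,1),(1,0,0,1)), ((1,0,0,1),(1,0,0,1)), ((1,-2,0,1),(0,-1,1,0)), ((1,0,0,1),(1,0,0,1)), ((1,0,0,1),(1,0,0,1)), ((1,0,0,1),(1,0,0,1)), ((1,0,0,1),(1,0,0,1)), ((1,0,0,1),(1,0,0,1)), ((1,0,0,1),(1,0,0,1)), ((1,0,0,1),(1,0,0,1)), ((1,0,0,1),(1,0,0,1)), ((-1,4,-1,3),(1,0,0,1)), ((1,0,0,1),(1,0,0,1)), ((1,0,0,1),(1,0,0,1)), ((1,0,0,1),(1,0,0,1)), ((1,0,0,1),(1,0,0,1)), ((1,0,0,1),(1,0,0,1)), ((1,0,0,1),(1,0,0,1))]"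
  by code_simp
lemma FP23_chk: "list_all (\<lambda>x. list_all (\<lambda>y. if x = y then True else list_all (\<lambda>w. \<not> P9 (red 9 (mmul (mmul y w) (minv x)))) SWi) FX23) FX23"
  by code_simp
lemma F23: "fiber (Gam P9) (Gam PB) (act (1,-2,0,1) (pti 0)) = (\<lambda>x. orb (Gam P9) (act x (pti 0))) ` set FX23"
  by (rule fiber_W[OF stabdata_i gpred_P9 gpred_PB sub_9B Tk_SL cover_9 R9_SL conjunct1[OF FX23_chk] conjunct2[OF conjunct2[OF FX23_chk]] FW23_chk])
lemma FC23: "card ((\<lambda>x. orb (Gam P9) (act x (pti 0))) ` set FX23) = 2"
  using card_W[OF stabdata_i gpred_P9 conjunct1[OF FX23_chk] conjunct1[OF conjunct2[OF FX23_chk]] FP23_chk] by (simp add: FX23_def)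

lemma RS24: "ram (Gam P9) (Gam PB) (act (-1,4,-1,3) (pti 0)) = 1"
proof -
  have "rf P9 PB SWi (-1,4,-1,3) = 1" by code_simp
  then show ?thesis using ram_rf[OF stabdata_i gpred_P9 gpred_PB, of "(-1,4,-1,3)"] by (simp add: SL2Z_def)
qed

lemma RS25: "ram (Gam P9) (Gam PB) (act (1,-2,0,1) (pti 0)) = 2"
proof -
  have "rf P9 PB SWi (1,-2,0,1) = 2" by code_simp
  then show ?thesis using ram_rf[OF stabdata_i gpred_P9 gpred_PB, of "(1,-2,0,1)"] by (simp add: SL2Z_def)
qed

lemma RV26: "list_all (\<lambda>r. if PT (red 9 (mmul r (minv (1,0,0,1)))) then rf P3 PT SWinf r = 3 else True) R3"
  by code_simp
lemma RA26: "\<forall>x\<in>orb (Gam PT) (act (1,0,0,1) (cinf)). ram (Gam P3) (Gam PT) x = 3"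
  by (rule ram_W[OF stabdata_inf gpred_P3 gpred_PT gpred_PT sub_T sub_T I_SL cover_3 R3_SL RV26])

lemma RV27: "list_all (\<lambda>r. if PT (red 9 (mmul r (minv (1,0,0,1)))) then rf PB PT SWinf r = 9 else True) RB"
  by code_simp
lemma RA27: "\<forall>x\<in>orb (Gam PT) (act (1,0,0,1) (cinf)). ram (Gam PB) (Gam PT) x = 9"
  by (rule ram_W[OF stabdata_inf gpred_PB gpred_PT gpred_PT sub_T sub_T I_SL cover_B RB_SL RV27])

lemma RV28: "list_all (\<lambda>r. if PT (red 9 (mmul r (minv (1,0,0,1)))) then rf P9 PT SWinf r = 9 else True) R9"
  by code_simp
lemma RA28: "\<forall>x\<in>orb (Gam PT) (act (1,0,0,1) (cinf)). ram (Gam P9) (Gam PT) x = 9"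
  by (rule ram_W[OF stabdata_inf gpred_P9 gpred_PT gpred_PT sub_T sub_T I_SL cover_9 R9_SL RV28])

lemma RV29: "list_all (\<lambda>r. if PT (red 9 (mmul r (minv (1,0,0,1)))) then rf P9 PB SWinf r = 1 else True) R9"
  by code_simp
lemma RA29: "\<forall>x\<in>orb (Gam PT) (act (1,0,0,1) (cinf)). ram (Gam P9) (Gam PB) x = 1"
  by (rule ram_W[OF stabdata_inf gpred_P9 gpred_PB gpred_PT sub_9B sub_T I_SL cover_9 R9_SL RV29])

lemma RV30: "list_all (\<lambda>r. if PT (red 9 (mmul r (minv (1,0,0,1)))) then rf P3 PT SWrho r = 3 else True) R3"
  by code_simp
lemma RA30: "\<forall>x\<in>orb (Gam PT) (act (1,0,0,1) (rho)). ram (Gam P3) (Gam PT) x = 3"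
  by (rule ram_W[OF stabdata_rho gpred_P3 gpred_PT gpred_PT sub_T sub_T I_SL cover_3 R3_SL RV30])

lemma RV31: "list_all (\<lambda>r. if PT (red 9 (mmul r (minv (1,0,0,1)))) then rf PB PT SWrho r = 3 else True) RB"
  by code_simp
lemma RA31: "\<forall>x\<in>orb (Gam PT) (act (1,0,0,1) (rho)). ram (Gam PB) (Gam PT) x = 3"
  by (rule ram_W[OF stabdata_rho gpred_PB gpred_PT gpred_PT sub_T sub_T I_SL cover_B RB_SL RV31])

lemma RV32: "list_all (\<lambda>r. if PT (red 9 (mmul r (minv (1,0,0,1)))) then rf P9 PT SWrho r = 3 else True) R9"
  by code_simp
lemma RA32: "\<forall>x\<in>orb (Gam PT) (act (1,0,0,1) (rho)). ram (Gam P9) (Gam PT) x = 3"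
  by (rule ram_W[OF stabdata_rho gpred_P9 gpred_PT gpred_PT sub_T sub_T I_SL cover_9 R9_SL RV32])

lemma RV33: "list_all (\<lambda>r. if PT (red 9 (mmul r (minv (1,0,0,1)))) then rf P9 PB SWrho r = 1 else True) R9"
  by code_simp
lemma RA33: "\<forall>x\<in>orb (Gam PT) (act (1,0,0,1) (rho)). ram (Gam P9) (Gam PB) x = 1"
  by (rule ram_W[OF stabdata_rho gpred_P9 gpred_PB gpred_PT sub_9B sub_T I_SL cover_9 R9_SL RV33])

lemma RV34: "list_all (\<lambda>r. if PT (red 9 (mmul r (minv (1,0,0,1)))) then rf PB P3 SWrho r = 1 else True) RB"
  by code_simp
lemma RA34: "\<forall>x\<in>orb (Gam PT) (act (1,0,0,1) (rho)). ram (Gam PB) (Gam P3) x = 1"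
  by (rule ram_W[OF stabdata_rho gpred_PB gpred_P3 gpred_PT sub_B3 sub_T I_SL cover_B RB_SL RV34])

lemma RV35: "list_all (\<lambda>r. if PT (red 9 (mmul r (minv (1,0,0,1)))) then rf P3 PT SWi r = 1 else True) R3"
  by code_simp
lemma RA35: "\<forall>x\<in>orb (Gam PT) (act (1,0,0,1) (pti 0)). ram (Gam P3) (Gam PT) x = 1"
  by (rule ram_W[OF stabdata_i gpred_P3 gpred_PT gpred_PT sub_T sub_T I_SL cover_3 R3_SL RV35])

lemma RV36: "list_all (\<lambda>r. if PB (red 9 (mmul r (minv (1,3,0,1)))) then rf P9 PB SWi r = 1 else True) R9"
  by code_simp
lemma RA36: "\<forall>x\<in>orb (Gam PB) (act (1,3,0,1) (pti 0)). ram (Gam P9) (Gam PB) x = 1"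
  by (rule ram_W[OF stabdata_i gpred_P9 gpred_PB gpred_PB sub_9B sub_9B Tk_SL cover_9 R9_SL RV36])

lemma RV37: "list_all (\<lambda>r. if PB (red 9 (mmul r (minv (1,-1,0,1)))) then rf P9 PB SWi r = 1 else True) R9"
  by code_simp
lemma RA37: "\<forall>x\<in>orb (Gam PB) (act (1,-1,0,1) (pti 0)). ram (Gam P9) (Gam PB) x = 1"
  by (rule ram_W[OF stabdata_i gpred_P9 gpred_PB gpred_PB sub_9B sub_9B Tk_SL cover_9 R9_SL RV37])

lemma RV38: "list_all (\<lambda>r. if PB (red 9 (mmul r (minv (1,-4,0,1)))) then rf P9 PB SWi r = 1 else True) R9"
  by code_simp
lemma RA38: "\<forall>x\<in>orb (Gam PB) (act (1,-4,0,1) (pti 0)). ram (Gam P9) (Gam PB) x = 1"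
  by (rule ram_W[OF stabdata_i gpred_P9 gpred_PB gpred_PB sub_9B sub_9B Tk_SL cover_9 R9_SL RV38])

lemma RS39: "ram (Gam PB) (Gam P3) (act (1,0,0,1) (pti 0)) = 1"
proof -
  have "rf PB P3 SWi (1,0,0,1) = 1" by code_simp
  then show ?thesis using ram_rf[OF stabdata_i gpred_PB gpred_P3, of "(1,0,0,1)"] by (simp add: SL2Z_def)
qed

lemma RS40: "ram (Gam PB) (Gam P3) (act (1,3,0,1) (pti 0)) = 2"
proof -
  have "rf PB P3 SWi (1,3,0,1) = 2" by code_simp
  then show ?thesis using ram_rf[OF stabdata_i gpred_PB gpred_P3, of "(1,3,0,1)"] by (simp add: SL2Z_def)
qed

lemma RS41: "ram (Gam PB) (Gam P3) (act (1,-1,0,1) (pti 0)) = 2"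
proof -
  have "rf PB P3 SWi (1,-1,0,1) = 2" by code_simp
  then show ?thesis using ram_rf[OF stabdata_i gpred_PB gpred_P3, of "(1,-1,0,1)"] by (simp add: SL2Z_def)
qed

lemma RS42: "ram (Gam PB) (Gam P3) (act (1,-4,0,1) (pti 0)) = 1"
proof -
  have "rf PB P3 SWi (1,-4,0,1) = 1" by code_simp
  then show ?thesis using ram_rf[OF stabdata_i gpred_PB gpred_P3, of "(1,-4,0,1)"] by (simp add: SL2Z_def)
qed

lemma RS43: "ram (Gam PB) (Gam P3) (act (1,1,0,1) (pti 0)) = 1"
proof -
  have "rf PB P3 SWi (1,1,0,1) = 1" by code_simp
  then show ?thesis using ram_rf[OF stabdata_i gpred_PB gpred_P3, of "(1,1,0,1)"] by (simp add: SL2Z_def)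
qed

lemma RS44: "ram (Gam PB) (Gam P3) (act (1,4,0,1) (pti 0)) = 1"
proof -
  have "rf PB P3 SWi (1,4,0,1) = 1" by code_simp
  then show ?thesis using ram_rf[OF stabdata_i gpred_PB gpred_P3, of "(1,4,0,1)"] by (simp add: SL2Z_def)
qed

lemma RS45: "ram (Gam PB) (Gam P3) (act (1,-2,0,1) (pti 0)) = 1"
proof -
  have "rf PB P3 SWi (1,-2,0,1) = 1" by code_simp
  then show ?thesis using ram_rf[OF stabdata_i gpred_PB gpred_P3, of "(1,-2,0,1)"] by (simp add: SL2Z_def)
qed


lemma orb_mem:
  assumes "base t" "gpred P" "g0 \<in> SL2Z" "a \<in> SL2Z" "P (red 9 (mmul a (minv g0)))"
  shows "act a t \<in> orb (Gam P) (act g0 t)"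
proof -
  have "mmul a (minv g0) \<in> Gam P" using assms(4,5) SL2Z_mmul[OF assms(4) SL2Z_minv[OF assms(3)]] by (simp add: Gam_def)
  moreover have "mmul (mmul a (minv g0)) g0 = a" using assms(3) by (simp add: mmul_assoc minv_mmul_cancel)
  ultimately show ?thesis unfolding orb_act[OF assms(1) Gam_SL assms(3)] by (metis (mono_tags, lifting) mem_Collect_eq)
qed

lemma card2_neq: "card {a, b} = 2 \<Longrightarrow> a \<noteq> b" by auto

lemma Hc0: "\<exists>x \<in> orb Gamma_B (pti 0). \<exists>y \<in> orb Gamma_B (pti 0).
        fiber Gamma_C9 Gamma_B (pti 0) = {orb Gamma_C9 x, orb Gamma_C9 y}
        \<and> orb Gamma_C9 x \<noteq> orb Gamma_C9 y
        \<and> ram Gamma_C9 Gamma_B x = 1 \<and> ram Gamma_C9 Gamma_B y = 2"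
proof -
  have ab: "PB (red 9 (mmul (1,0,0,1) (minv (1,0,0,1)))) \<and> PB (red 9 (mmul (-1,2,-1,1) (minv (1,0,0,1))))" by code_simp
  have xa: "act (1,0,0,1) (pti 0) \<in> orb (Gam PB) (act (1,0,0,1) (pti 0))"
    by (rule orb_mem[OF base_pti gpred_PB Tk_SL]) (use ab in \<open>simp_all add: SL2Z_def\<close>)
  have yb: "act (-1,2,-1,1) (pti 0) \<in> orb (Gam PB) (act (1,0,0,1) (pti 0))"
    by (rule orb_mem[OF base_pti gpred_PB Tk_SL]) (use ab in \<open>simp_all add: SL2Z_def\<close>)
  have fib: "fiber (Gam P9) (Gam PB) (act (1,0,0,1) (pti 0)) = {orb (Gam P9) (act (1,0,0,1) (pti 0)), orb (Gam P9) (act (-1,2,-1,1) (pti 0))}"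
    using F14 by (simp add: FX14_def)
  have c: "card {orb (Gam P9) (act (1,0,0,1) (pti 0)), orb (Gam P9) (act (-1,2,-1,1) (pti 0))} = 2"
    using FC14 by (simp add: FX14_def)
  note facts = xa[unfolded pti_act] yb[unfolded pti_act] fib[unfolded pti_act]
    card2_neq[OF c, unfolded pti_act] RS15[unfolded pti_act] RS16[unfolded pti_act]
  show ?thesis unfolding Gamma_C9_eq Gamma_B_eq
    using facts by blast
qed

lemma Hc1: "\<exists>x \<in> orb Gamma_B (pti 1). \<exists>y \<in> orb Gamma_B (pti 1).
        fiber Gamma_C9 Gamma_B (pti 1) = {orb Gamma_C9 x, orb Gamma_C9 y}
        \<and> orb Gamma_C9 x \<noteq> orb Gamma_C9 y
        \<and> ram Gamma_C9 Gamma_B x = 1 \<and> ram Gamma_C9 Gamma_B y = 2"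
proof -
  have ab: "PB (red 9 (mmul (-2,-3,-1,-2) (minv (1,1,0,1)))) \<and> PB (red 9 (mmul (1,1,0,1) (minv (1,1,0,1))))" by code_simp
  have xa: "act (-2,-3,-1,-2) (pti 0) \<in> orb (Gam PB) (act (1,1,0,1) (pti 0))"
    by (rule orb_mem[OF base_pti gpred_PB Tk_SL]) (use ab in \<open>simp_all add: SL2Z_def\<close>)
  have yb: "act (1,1,0,1) (pti 0) \<in> orb (Gam PB) (act (1,1,0,1) (pti 0))"
    by (rule orb_mem[OF base_pti gpred_PB Tk_SL]) (use ab in \<open>simp_all add: SL2Z_def\<close>)
  have fib: "fiber (Gam P9) (Gam PB) (act (1,1,0,1) (pti 0)) = {orb (Gam P9) (act (-2,-3,-1,-2) (pti 0)), orb (Gam P9) (act (1,1,0,1) (pti 0))}"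
    using F17 by (simp add: FX17_def)
  have c: "card {orb (Gam P9) (act (-2,-3,-1,-2) (pti 0)), orb (Gam P9) (act (1,1,0,1) (pti 0))} = 2"
    using FC17 by (simp add: FX17_def)
  note facts = xa[unfolded pti_act] yb[unfolded pti_act] fib[unfolded pti_act]
    card2_neq[OF c, unfolded pti_act] RS18[unfolded pti_act] RS19[unfolded pti_act]
  show ?thesis unfolding Gamma_C9_eq Gamma_B_eq
    using facts by blast
qed

lemma Hc4: "\<exists>x \<in> orb Gamma_B (pti 4). \<exists>y \<in> orb Gamma_B (pti 4).
        fiber Gamma_C9 Gamma_B (pti 4) = {orb Gamma_C9 x, orb Gamma_C9 y}
        \<and> orb Gamma_C9 x \<noteq> orb Gamma_C9 y
        \<and> ram Gamma_C9 Gamma_B x = 1 \<and> ram Gamma_C9 Gamma_B y = 2"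
proof -
  have ab: "PB (red 9 (mmul (1,4,0,1) (minv (1,4,0,1)))) \<and> PB (red 9 (mmul (1,3,-1,-2) (minv (1,4,0,1))))" by code_simp
  have xa: "act (1,4,0,1) (pti 0) \<in> orb (Gam PB) (act (1,4,0,1) (pti 0))"
    by (rule orb_mem[OF base_pti gpred_PB Tk_SL]) (use ab in \<open>simp_all add: SL2Z_def\<close>)
  have yb: "act (1,3,-1,-2) (pti 0) \<in> orb (Gam PB) (act (1,4,0,1) (pti 0))"
    by (rule orb_mem[OF base_pti gpred_PB Tk_SL]) (use ab in \<open>simp_all add: SL2Z_def\<close>)
  have fib: "fiber (Gam P9) (Gam PB) (act (1,4,0,1) (pti 0)) = {orb (Gam P9) (act (1,4,0,1) (pti 0)), orb (Gam P9) (act (1,3,-1,-2) (pti 0))}"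
    using F20 by (simp add: FX20_def)
  have c: "card {orb (Gam P9) (act (1,4,0,1) (pti 0)), orb (Gam P9) (act (1,3,-1,-2) (pti 0))} = 2"
    using FC20 by (simp add: FX20_def)
  note facts = xa[unfolded pti_act] yb[unfolded pti_act] fib[unfolded pti_act]
    card2_neq[OF c, unfolded pti_act] RS21[unfolded pti_act] RS22[unfolded pti_act]
  show ?thesis unfolding Gamma_C9_eq Gamma_B_eq
    using facts by blast
qed

lemma Hcm2: "\<exists>x \<in> orb Gamma_B (pti (-2)). \<exists>y \<in> orb Gamma_B (pti (-2)).
        fiber Gamma_C9 Gamma_B (pti (-2)) = {orb Gamma_C9 x, orb Gamma_C9 y}
        \<and> orb Gamma_C9 x \<noteq> orb Gamma_C9 y
        \<and> ram Gamma_C9 Gamma_B x = 1 \<and> ram Gamma_C9 Gamma_B y = 2"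
proof -
  have ab: "PB (red 9 (mmul (-1,4,-1,3) (minv (1,-2,0,1)))) \<and> PB (red 9 (mmul (1,-2,0,1) (minv (1,-2,0,1))))" by code_simp
  have xa: "act (-1,4,-1,3) (pti 0) \<in> orb (Gam PB) (act (1,-2,0,1) (pti 0))"
    by (rule orb_mem[OF base_pti gpred_PB Tk_SL]) (use ab in \<open>simp_all add: SL2Z_def\<close>)
  have yb: "act (1,-2,0,1) (pti 0) \<in> orb (Gam PB) (act (1,-2,0,1) (pti 0))"
    by (rule orb_mem[OF base_pti gpred_PB Tk_SL]) (use ab in \<open>simp_all add: SL2Z_def\<close>)
  have fib: "fiber (Gam P9) (Gam PB) (act (1,-2,0,1) (pti 0)) = {orb (Gam P9) (act (-1,4,-1,3) (pti 0)), orb (Gam P9) (act (1,-2,0,1) (pti 0))}"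
    using F23 by (simp add: FX23_def)
  have c: "card {orb (Gam P9) (act (-1,4,-1,3) (pti 0)), orb (Gam P9) (act (1,-2,0,1) (pti 0))} = 2"
    using FC23 by (simp add: FX23_def)
  note facts = xa[unfolded pti_act] yb[unfolded pti_act] fib[unfolded pti_act]
    card2_neq[OF c, unfolded pti_act] RS24[unfolded pti_act] RS25[unfolded pti_act]
  show ?thesis unfolding Gamma_C9_eq Gamma_B_eq
    using facts by blast
qed


theorem proposition3p3:
  shows
  \<comment> \<open>(1) above \<infinity>\<close>
  "card (fiber Gamma_C3 SL2Z cinf) = 1
   \<and> (\<forall>x \<in> orb SL2Z cinf. ram Gamma_C3 SL2Z x = 3)
   \<and> card (fiber Gamma_B SL2Z cinf) = 1
   \<and> (\<forall>x \<in> orb SL2Z cinf. ram Gamma_B SL2Z x = 9)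
   \<and> card (fiber Gamma_C9 SL2Z cinf) = 3
   \<and> (\<forall>x \<in> orb SL2Z cinf. ram Gamma_C9 SL2Z x = 9)
   \<and> (\<forall>x \<in> orb SL2Z cinf. ram Gamma_C9 Gamma_B x = 1)
  \<comment> \<open>(2) above \<rho>\<close>
   \<and> card (fiber Gamma_C3 SL2Z rho) = 1
   \<and> (\<forall>x \<in> orb SL2Z rho. ram Gamma_C3 SL2Z x = 3)
   \<and> card (fiber Gamma_B SL2Z rho) = 3
   \<and> (\<forall>x \<in> orb SL2Z rho. ram Gamma_B SL2Z x = 3)
   \<and> card (fiber Gamma_C9 SL2Z rho) = 9
   \<and> (\<forall>x \<in> orb SL2Z rho. ram Gamma_C9 SL2Z x = 3)
   \<and> (\<forall>x \<in> orb SL2Z rho. ram Gamma_C9 Gamma_B x = 1 \<and> ram Gamma_B Gamma_C3 x = 1)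
  \<comment> \<open>(3) above i: X_ns+(3)\<close>
   \<and> fiber Gamma_C3 SL2Z (pti 0) = {orb Gamma_C3 (pti 0), orb Gamma_C3 (pti 1), orb Gamma_C3 (pti (-1))}
   \<and> card (fiber Gamma_C3 SL2Z (pti 0)) = 3
   \<and> (\<forall>x \<in> orb SL2Z (pti 0). ram Gamma_C3 SL2Z x = 1)
  \<comment> \<open>pi_2 above the images of i, i-1, i+1\<close>
   \<and> fiber Gamma_B Gamma_C3 (pti 0) = {orb Gamma_B (pti 0), orb Gamma_B (pti 3)}
   \<and> card (fiber Gamma_B Gamma_C3 (pti 0)) = 2
   \<and> ram Gamma_B Gamma_C3 (pti 0) = 1 \<and> ram Gamma_B Gamma_C3 (pti 3) = 2
   \<and> fiber Gamma_B Gamma_C3 (pti (-1)) = {orb Gamma_B (pti (-1)), orb Gamma_B (pti (-4))}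
   \<and> card (fiber Gamma_B Gamma_C3 (pti (-1))) = 2
   \<and> ram Gamma_B Gamma_C3 (pti (-1)) = 2 \<and> ram Gamma_B Gamma_C3 (pti (-4)) = 1
   \<and> fiber Gamma_B Gamma_C3 (pti 1) = {orb Gamma_B (pti 1), orb Gamma_B (pti 4), orb Gamma_B (pti (-2))}
   \<and> card (fiber Gamma_B Gamma_C3 (pti 1)) = 3
   \<and> ram Gamma_B Gamma_C3 (pti 1) = 1 \<and> ram Gamma_B Gamma_C3 (pti 4) = 1
   \<and> ram Gamma_B Gamma_C3 (pti (-2)) = 1
  \<comment> \<open>pi_1 above the images in X_B\<close>
   \<and> (\<forall>k \<in> {3, -1, -4}. card (fiber Gamma_C9 Gamma_B (pti k)) = 3
        \<and> (\<forall>x \<in> orb Gamma_B (pti k). ram Gamma_C9 Gamma_B x = 1))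
   \<and> (\<forall>k \<in> {0, 1, 4, -2}. \<exists>x \<in> orb Gamma_B (pti k). \<exists>y \<in> orb Gamma_B (pti k).
        fiber Gamma_C9 Gamma_B (pti k) = {orb Gamma_C9 x, orb Gamma_C9 y}
        \<and> orb Gamma_C9 x \<noteq> orb Gamma_C9 y
        \<and> ram Gamma_C9 Gamma_B x = 1 \<and> ram Gamma_C9 Gamma_B y = 2)"
proof -
  have a1: "card (fiber (Gam P3) (Gam PT) cinf) = 1" using F1 FC1 by (simp add: FX1_def cinf_act)
  have a2: "\<forall>x \<in> orb (Gam PT) cinf. ram (Gam P3) (Gam PT) x = 3" using RA26 by (simp add: cinf_act)
  have a3: "card (fiber (Gam PB) (Gam PT) cinf) = 1" using F2 FC2 by (simp add: FX2_def cinf_act)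
  have a4: "\<forall>x \<in> orb (Gam PT) cinf. ram (Gam PB) (Gam PT) x = 9" using RA27 by (simp add: cinf_act)
  have a5: "card (fiber (Gam P9) (Gam PT) cinf) = 3" using F3 FC3 by (simp only: cinf_act)
  have a6: "\<forall>x \<in> orb (Gam PT) cinf. ram (Gam P9) (Gam PT) x = 9" using RA28 by (simp add: cinf_act)
  have a7: "\<forall>x \<in> orb (Gam PT) cinf. ram (Gam P9) (Gam PB) x = 1" using RA29 by (simp add: cinf_act)
  have b1: "card (fiber (Gam P3) (Gam PT) rho) = 1" using F4 FC4 by (simp add: FX4_def rho_act)
  have b2: "\<forall>x \<in> orb (Gam PT) rho. ram (Gam P3) (Gam PT) x = 3" using RA30 by (simp add: rho_act)
  have b3: "card (fiber (Gam PB) (Gam PT) rho) = 3" using F5 FC5 by (simp only: rho_act)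
  have b4: "\<forall>x \<in> orb (Gam PT) rho. ram (Gam PB) (Gam PT) x = 3" using RA31 by (simp add: rho_act)
  have b5: "card (fiber (Gam P9) (Gam PT) rho) = 9" using F6 FC6 by (simp only: rho_act)
  have b6: "\<forall>x \<in> orb (Gam PT) rho. ram (Gam P9) (Gam PT) x = 3" using RA32 by (simp add: rho_act)
  have b7: "\<forall>x \<in> orb (Gam PT) rho. ram (Gam P9) (Gam PB) x = 1 \<and> ram (Gam PB) (Gam P3) x = 1"
    using RA33 RA34 by (simp add: rho_act)
  have c1: "fiber (Gam P3) (Gam PT) (pti 0) = {orb (Gam P3) (pti 0), orb (Gam P3) (pti 1), orb (Gam P3) (pti (-1))}"
    using F7[unfolded pti_act] by (simp add: FX7_def pti_act)
  have c2: "card (fiber (Gam P3) (Gam PT) (pti 0)) = 3" using F7[unfolded pti_act] FC7 by simp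
  have c3: "\<forall>x \<in> orb (Gam PT) (pti 0). ram (Gam P3) (Gam PT) x = 1" using RA35[unfolded pti_act] .
  have d1: "fiber (Gam PB) (Gam P3) (pti 0) = {orb (Gam PB) (pti 0), orb (Gam PB) (pti 3)}"
    using F8[unfolded pti_act] by (simp add: FX8_def pti_act)
  have d2: "card (fiber (Gam PB) (Gam P3) (pti 0)) = 2" using F8[unfolded pti_act] FC8 by simp
  have d3: "fiber (Gam PB) (Gam P3) (pti (-1)) = {orb (Gam PB) (pti (-1)), orb (Gam PB) (pti (-4))}"
    using F9[unfolded pti_act] by (simp add: FX9_def pti_act)
  have d4: "card (fiber (Gam PB) (Gam P3) (pti (-1))) = 2" using F9[unfolded pti_act] FC9 by simp
  have d5: "fiber (Gam PB) (Gam P3) (pti 1) = {orb (Gam PB) (pti 1), orb (Gam PB) (pti 4), orb (Gam PB) (pti (-2))}"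
    using F10[unfolded pti_act] by (simp add: FX10_def pti_act)
  have d6: "card (fiber (Gam PB) (Gam P3) (pti 1)) = 3" using F10[unfolded pti_act] FC10 by simp
  note r = RS39[unfolded pti_act] RS40[unfolded pti_act] RS41[unfolded pti_act] RS42[unfolded pti_act]
     RS43[unfolded pti_act] RS44[unfolded pti_act] RS45[unfolded pti_act]
  have e1: "card (fiber (Gam P9) (Gam PB) (pti 3)) = 3" using F11[unfolded pti_act] FC11 by simp
  have e2: "card (fiber (Gam P9) (Gam PB) (pti (-1))) = 3" using F12[unfolded pti_act] FC12 by simp
  have e3: "card (fiber (Gam P9) (Gam PB) (pti (-4))) = 3" using F13[unfolded pti_act] FC13 by simp
  note e4 = RA36[unfolded pti_act] RA37[unfolded pti_act] RA38[unfolded pti_act]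
  note h = Hc0[unfolded Gamma_C9_eq Gamma_B_eq] Hc1[unfolded Gamma_C9_eq Gamma_B_eq]
     Hc4[unfolded Gamma_C9_eq Gamma_B_eq] Hcm2[unfolded Gamma_C9_eq Gamma_B_eq]
  show ?thesis unfolding Gamma_C9_eq Gamma_B_eq Gamma_C3_eq SL2Z_eq
    using a1 a2 a3 a4 a5 a6 a7 b1 b2 b3 b4 b5 b6 b7 c1 c2 c3 d1 d2 d3 d4 d5 d6 r e1 e2 e3 e4 h
    by simp
qed


end
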